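(* Let $\Bbbk$ be a commutative ring of global dimension zero and let $C$ be a $\Bbbk$-coalgebra. The Hattori--Stallings corank $[M]\mapsto \mathrm{cotr}_M(\mathrm{id}_M)$ defines a homomorphism of abelian groups \[K_0^c(C)\longrightarrow \mathrm{coHH}_0(C)^*=\mathrm{Hom}_\Bbbk(\mathrm{coHH}_0(C),\Bbbk).\]
   Context: $\Bbbk$ is a finite product of fields; $\otimes=\otimes_\Bbbk$. $C=(C,\Delta,\varepsilon)$ is a coassociative counital $\Bbbk$-coalgebra; Sweedler notation $\Delta(c)=\sum c_{(1)}\otimes c_{(2)}$, and $\tau$ is the swap. $\mathrm{coHH}_0(C)$ is the kernel of $\Delta-\tau\circ\Delta\colon C\to C\otimes C$. A left $C$-comodule $M$ is finitely cogenerated if there is a $C$-colinear monomorphism $M\hookrightarrow C^{\oplus n}$ for some $n\ge0$; it is injective in the abelian category of left $C$-comodules. $K_0^c(C)$ is the group completion of the commutative monoid (under $\oplus$) of isomorphism classes of finitely cogenerated injective left $C$-comodules. Hattori--Stallings cotrace: for such $M$ choose a $C$-colinear monomorphism $i\colon M\to C^{\oplus n}$ and a $C$-colinear retraction $s\colon C^{\oplus n}\to M$. For a $C$-colinear $f\colon M\to M$, the $C$-colinear endomorphism $i\circ f\circ s$ of the cofree comodule $C^{\oplus n}=C\otimes\Bbbk^n$ corresponds, via ${}_C\mathrm{End}(C\otimes \Bbbk^n)\cong\mathrm{Hom}_\Bbbk(C\otimes\Bbbk^n,\Bbbk^n)\cong\mathrm{Hom}_\Bbbk(C,\mathcal M_n(\Bbbk))$,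 to a $\Bbbk$-linear map $c\mapsto f_c$. Define $\mathrm{cotr}_M(f)\in\mathrm{coHH}_0(C)^*$ by $\mathrm{cotr}_M(f)(c)=\sum\varepsilon(c_{(1)})\,\mathrm{tr}(f_{c_{(2)}})$ for $c\in\mathrm{coHH}_0(C)$. The corank of $M$ is $\mathrm{cotr}_M(\mathrm{id}_M)$. *)

theory Defs
  imports Main "HOL-Algebra.Group" "HOL-Library.Function_Algebras"
begin

text \<open>A commutative ring is (isomorphic to) a finite product of fields iff it has a finite
family of nonzero pairwise orthogonal idempotents summing to 1 such that each e*k is a field
(with unit e).\<close>
definition finite_product_of_fields :: "'k::comm_ring_1 itself \<Rightarrow> bool" where
  "finite_product_of_fields _ \<longleftrightarrow>
     (\<exists>E::'k set. finite E \<and> sum id E = 1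
        \<and> (\<forall>e\<in>E. e * e = e \<and> e \<noteq> 0)
        \<and> (\<forall>e\<in>E. \<forall>e'\<in>E. e \<noteq> e' \<longrightarrow> e * e' = 0)
        \<and> (\<forall>e\<in>E. \<forall>x. x * e \<noteq> 0 \<longrightarrow> (\<exists>y. x * e * y = e)))"

text \<open>A formal sum of simple tensors is a list of pairs; A \<otimes>_k B = Z[A x B] / R
where R is generated by biadditivity and balancedness.\<close>

definition delta :: "'a \<Rightarrow> 'a \<Rightarrow> int" where
  "delta p = (\<lambda>q. if q = p then 1 else 0)"

inductive_set tzero :: "('k::comm_ring_1 \<Rightarrow> 'a \<Rightarrow> 'a) \<Rightarrow> ('k \<Rightarrow> 'b \<Rightarrow> 'b)
    \<Rightarrow> (('a::ab_group_add \<times> 'b::ab_group_add) \<Rightarrow> int) set"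
  for sa sb where
  tz0: "(\<lambda>_. 0) \<in> tzero sa sb"
| tzaddl: "(\<lambda>q. delta (x + x', y) q - delta (x, y) q - delta (x', y) q) \<in> tzero sa sb"
| tzaddr: "(\<lambda>q. delta (x, y + y') q - delta (x, y) q - delta (x, y') q) \<in> tzero sa sb"
| tzbal: "(\<lambda>q. delta (sa a x, y) q - delta (x, sb a y) q) \<in> tzero sa sb"
| tzplus: "f \<in> tzero sa sb \<Longrightarrow> g \<in> tzero sa sb \<Longrightarrow> (\<lambda>q. f q + g q) \<in> tzero sa sb"
| tzuminus: "f \<in> tzero sa sb \<Longrightarrow> (\<lambda>q. - f q) \<in> tzero sa sb"

definition tensor_eq :: "('k::comm_ring_1 \<Rightarrow> 'a \<Rightarrow> 'a) \<Rightarrow> ('k \<Rightarrow> 'b \<Rightarrow> 'b)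
    \<Rightarrow> ('a::ab_group_add \<times> 'b::ab_group_add) list \<Rightarrow> ('a \<times> 'b) list \<Rightarrow> bool" where
  "tensor_eq sa sb L1 L2 \<longleftrightarrow>
     (\<lambda>q. int (count_list L1 q) - int (count_list L2 q)) \<in> tzero sa sb"

inductive_set tzero3 :: "('k::comm_ring_1 \<Rightarrow> 'a \<Rightarrow> 'a) \<Rightarrow> ('k \<Rightarrow> 'b \<Rightarrow> 'b) \<Rightarrow> ('k \<Rightarrow> 'c \<Rightarrow> 'c)
    \<Rightarrow> (('a::ab_group_add \<times> 'b::ab_group_add \<times> 'c::ab_group_add) \<Rightarrow> int) set"
  for sa sb sc where
  tz30: "(\<lambda>_. 0) \<in> tzero3 sa sb sc"
| tz3add1: "(\<lambda>q. delta (x + x', y, z) q - delta (x, y, z) q - delta (x', y, z) q) \<in> tzero3 sa sb sc"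
| tz3add2: "(\<lambda>q. delta (x, y + y', z) q - delta (x, y, z) q - delta (x, y', z) q) \<in> tzero3 sa sb sc"
| tz3add3: "(\<lambda>q. delta (x, y, z + z') q - delta (x, y, z) q - delta (x, y, z') q) \<in> tzero3 sa sb sc"
| tz3bal1: "(\<lambda>q. delta (sa a x, y, z) q - delta (x, sb a y, z) q) \<in> tzero3 sa sb sc"
| tz3bal2: "(\<lambda>q. delta (x, sb a y, z) q - delta (x, y, sc a z) q) \<in> tzero3 sa sb sc"
| tz3plus: "f \<in> tzero3 sa sb sc \<Longrightarrow> g \<in> tzero3 sa sb sc \<Longrightarrow> (\<lambda>q. f q + g q) \<in> tzero3 sa sb sc"
| tz3uminus: "f \<in> tzero3 sa sb sc \<Longrightarrow> (\<lambda>q. - f q) \<in> tzero3 sa sb sc"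

definition tensor3_eq :: "('k::comm_ring_1 \<Rightarrow> 'a \<Rightarrow> 'a) \<Rightarrow> ('k \<Rightarrow> 'b \<Rightarrow> 'b) \<Rightarrow> ('k \<Rightarrow> 'c \<Rightarrow> 'c)
    \<Rightarrow> ('a::ab_group_add \<times> 'b::ab_group_add \<times> 'c::ab_group_add) list \<Rightarrow> ('a \<times> 'b \<times> 'c) list \<Rightarrow> bool" where
  "tensor3_eq sa sb sc L1 L2 \<longleftrightarrow>
     (\<lambda>q. int (count_list L1 q) - int (count_list L2 q)) \<in> tzero3 sa sb sc"

text \<open>The comultiplication is given by a choice of representative
\<Delta>(c) = sum of c1 \<otimes> c2 (a list of pairs); conditions are up to equality in the tensor product.\<close>

definition coalgebra :: "('k::comm_ring_1 \<Rightarrow> 'c::ab_group_add \<Rightarrow> 'c)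
    \<Rightarrow> ('c \<Rightarrow> ('c \<times> 'c) list) \<Rightarrow> ('c \<Rightarrow> 'k) \<Rightarrow> bool" where
  "coalgebra sc \<Delta> \<epsilon> \<longleftrightarrow>
     (\<forall>a x y. sc a (x + y) = sc a x + sc a y) \<and> (\<forall>a b x. sc (a + b) x = sc a x + sc b x)
   \<and> (\<forall>a b x. sc a (sc b x) = sc (a * b) x) \<and> (\<forall>x. sc 1 x = x)
   \<and> (\<forall>x y. \<epsilon> (x + y) = \<epsilon> x + \<epsilon> y) \<and> (\<forall>a x. \<epsilon> (sc a x) = a * \<epsilon> x)
   \<and> (\<forall>x y. tensor_eq sc sc (\<Delta> (x + y)) (\<Delta> x @ \<Delta> y))
   \<and> (\<forall>a x. tensor_eq sc sc (\<Delta> (sc a x)) (map (\<lambda>(u, v). (sc a u, v)) (\<Delta> x)))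
   \<and> (\<forall>c. tensor3_eq sc sc sc
          (concat (map (\<lambda>(u, v). map (\<lambda>(u1, u2). (u1, u2, v)) (\<Delta> u)) (\<Delta> c)))
          (concat (map (\<lambda>(u, v). map (\<lambda>(v1, v2). (u, v1, v2)) (\<Delta> v)) (\<Delta> c))))
   \<and> (\<forall>c. sum_list (map (\<lambda>(u, v). sc (\<epsilon> u) v) (\<Delta> c)) = c)
   \<and> (\<forall>c. sum_list (map (\<lambda>(u, v). sc (\<epsilon> v) u) (\<Delta> c)) = c)"

definition coHH0 :: "('k::comm_ring_1 \<Rightarrow> 'c::ab_group_add \<Rightarrow> 'c) \<Rightarrow> ('c \<Rightarrow> ('c \<times> 'c) list) \<Rightarrow> 'c set" where
  "coHH0 sc \<Delta> = {c. tensor_eq sc sc (\<Delta> c) (map (\<lambda>(u, v). (v, u)) (\<Delta> c))}"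

text \<open>All comodules considered live in the ambient k-module nat \<Rightarrow> C (pointwise operations);
C^n is the set of vectors supported on {0..<n}.\<close>

definition vscale :: "('k \<Rightarrow> 'c \<Rightarrow> 'c) \<Rightarrow> 'k \<Rightarrow> (nat \<Rightarrow> 'c) \<Rightarrow> (nat \<Rightarrow> 'c)" where
  "vscale sc a x = (\<lambda>i. sc a (x i))"

definition vadd :: "(nat \<Rightarrow> 'c::ab_group_add) \<Rightarrow> (nat \<Rightarrow> 'c) \<Rightarrow> (nat \<Rightarrow> 'c)" where
  "vadd x y = (\<lambda>i. x i + y i)"

definition vzero :: "nat \<Rightarrow> 'c::ab_group_add" where
  "vzero = (\<lambda>_. 0)"

definition vins :: "nat \<Rightarrow> 'c::ab_group_add \<Rightarrow> (nat \<Rightarrow> 'c)" where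
  "vins l v = (\<lambda>j. if j = l then v else 0)"

definition Cn :: "nat \<Rightarrow> (nat \<Rightarrow> 'c::ab_group_add) set" where
  "Cn n = {x. \<forall>i\<ge>n. x i = 0}"

definition coact :: "('c \<Rightarrow> ('c \<times> 'c) list) \<Rightarrow> nat \<Rightarrow> (nat \<Rightarrow> 'c::ab_group_add) \<Rightarrow> ('c \<times> (nat \<Rightarrow> 'c)) list" where
  "coact \<Delta> n x = concat (map (\<lambda>i. map (\<lambda>(u, v). (u, vins i v)) (\<Delta> (x i))) [0..<n])"

definition subcomodule :: "('k::comm_ring_1 \<Rightarrow> 'c::ab_group_add \<Rightarrow> 'c) \<Rightarrow> ('c \<Rightarrow> ('c \<times> 'c) list)
    \<Rightarrow> nat \<Rightarrow> (nat \<Rightarrow> 'c) set \<Rightarrow> bool" where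
  "subcomodule sc \<Delta> n M \<longleftrightarrow>
     M \<subseteq> Cn n \<and> vzero \<in> M \<and> (\<forall>x\<in>M. \<forall>y\<in>M. vadd x y \<in> M) \<and> (\<forall>a. \<forall>x\<in>M. vscale sc a x \<in> M)
   \<and> (\<forall>x\<in>M. \<exists>L. set L \<subseteq> UNIV \<times> M \<and> tensor_eq sc (vscale sc) L (coact \<Delta> n x))"

definition colinear :: "('k::comm_ring_1 \<Rightarrow> 'c::ab_group_add \<Rightarrow> 'c) \<Rightarrow> ('c \<Rightarrow> ('c \<times> 'c) list)
    \<Rightarrow> nat \<Rightarrow> (nat \<Rightarrow> 'c) set \<Rightarrow> nat \<Rightarrow> (nat \<Rightarrow> 'c) set \<Rightarrow> ((nat \<Rightarrow> 'c) \<Rightarrow> (nat \<Rightarrow> 'c)) \<Rightarrow> bool" where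
  "colinear sc \<Delta> n A m B f \<longleftrightarrow>
     (\<forall>x\<in>A. f x \<in> B)
   \<and> (\<forall>x\<in>A. \<forall>y\<in>A. f (vadd x y) = vadd (f x) (f y))
   \<and> (\<forall>a. \<forall>x\<in>A. f (vscale sc a x) = vscale sc a (f x))
   \<and> (\<forall>x\<in>A. \<forall>L. set L \<subseteq> UNIV \<times> A \<and> tensor_eq sc (vscale sc) L (coact \<Delta> n x) \<longrightarrow>
        tensor_eq sc (vscale sc) (map (\<lambda>(u, y). (u, f y)) L) (coact \<Delta> m (f x)))"

text \<open>Injectivity in the category of comodules (extension property), tested against
monomorphisms between finitely cogenerated comodules.\<close>
definition injective_comod :: "('k::comm_ring_1 \<Rightarrow> 'c::ab_group_add \<Rightarrow> 'c) \<Rightarrow> ('c \<Rightarrow> ('c \<times> 'c) list)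
    \<Rightarrow> nat \<Rightarrow> (nat \<Rightarrow> 'c) set \<Rightarrow> bool" where
  "injective_comod sc \<Delta> n M \<longleftrightarrow>
     subcomodule sc \<Delta> n M \<and>
     (\<forall>p A B g. subcomodule sc \<Delta> p A \<and> subcomodule sc \<Delta> p B \<and> A \<subseteq> B \<and> colinear sc \<Delta> p A n M g
        \<longrightarrow> (\<exists>h. colinear sc \<Delta> p B n M h \<and> (\<forall>x\<in>A. h x = g x)))"

type_synonym 'c cobj = "nat \<times> (nat \<Rightarrow> 'c) set"

definition valid_obj :: "('k::comm_ring_1 \<Rightarrow> 'c::ab_group_add \<Rightarrow> 'c) \<Rightarrow> ('c \<Rightarrow> ('c \<times> 'c) list) \<Rightarrow> 'c cobj \<Rightarrow> bool" where
  "valid_obj sc \<Delta> P \<longleftrightarrow> injective_comod sc \<Delta> (fst P) (snd P)"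

definition iso_obj :: "('k::comm_ring_1 \<Rightarrow> 'c::ab_group_add \<Rightarrow> 'c) \<Rightarrow> ('c \<Rightarrow> ('c \<times> 'c) list) \<Rightarrow> 'c cobj \<Rightarrow> 'c cobj \<Rightarrow> bool" where
  "iso_obj sc \<Delta> P Q \<longleftrightarrow>
     (\<exists>f. colinear sc \<Delta> (fst P) (snd P) (fst Q) (snd Q) f \<and> bij_betw f (snd P) (snd Q))"

definition dsum :: "'c::ab_group_add cobj \<Rightarrow> 'c cobj \<Rightarrow> 'c cobj" where
  "dsum P Q = (fst P + fst Q,
      {(\<lambda>i. if i < fst P then x i else y (i - fst P)) | x y. x \<in> snd P \<and> y \<in> snd Q})"

definition zobj :: "'c::ab_group_add cobj" where
  "zobj = (0, {vzero})"

definition K0rel :: "('k::comm_ring_1 \<Rightarrow> 'c::ab_group_add \<Rightarrow> 'c) \<Rightarrow> ('c \<Rightarrow> ('c \<times> 'c) list)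
    \<Rightarrow> 'c cobj \<times> 'c cobj \<Rightarrow> 'c cobj \<times> 'c cobj \<Rightarrow> bool" where
  "K0rel sc \<Delta> PQ PQ' \<longleftrightarrow>
     (\<exists>R. valid_obj sc \<Delta> R \<and>
        iso_obj sc \<Delta> (dsum (dsum (fst PQ) (snd PQ')) R) (dsum (dsum (fst PQ') (snd PQ)) R))"

text \<open>The class of the formal difference [P] - [Q].\<close>
definition K0cls :: "('k::comm_ring_1 \<Rightarrow> 'c::ab_group_add \<Rightarrow> 'c) \<Rightarrow> ('c \<Rightarrow> ('c \<times> 'c) list)
    \<Rightarrow> 'c cobj \<Rightarrow> 'c cobj \<Rightarrow> ('c cobj \<times> 'c cobj) set" where
  "K0cls sc \<Delta> P Q = {PQ'. valid_obj sc \<Delta> (fst PQ') \<and> valid_obj sc \<Delta> (snd PQ') \<and> K0rel sc \<Delta> (P, Q) PQ'}"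

definition K0c :: "('k::comm_ring_1 \<Rightarrow> 'c::ab_group_add \<Rightarrow> 'c) \<Rightarrow> ('c \<Rightarrow> ('c \<times> 'c) list)
    \<Rightarrow> ('c cobj \<times> 'c cobj) set monoid" where
  "K0c sc \<Delta> =
     \<lparr>carrier = {K0cls sc \<Delta> P Q | P Q. valid_obj sc \<Delta> P \<and> valid_obj sc \<Delta> Q},
      mult = (\<lambda>X Y. let PQ = (SOME PQ. PQ \<in> X); PQ' = (SOME PQ'. PQ' \<in> Y)
                     in K0cls sc \<Delta> (dsum (fst PQ) (fst PQ')) (dsum (snd PQ) (snd PQ'))),
      one = K0cls sc \<Delta> zobj zobj\<rparr>"

definition dual_coHH0 :: "('k::comm_ring_1 \<Rightarrow> 'c::ab_group_add \<Rightarrow> 'c) \<Rightarrow> ('c \<Rightarrow> ('c \<times> 'c) list)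
    \<Rightarrow> ('c \<Rightarrow> 'k) monoid" where
  "dual_coHH0 sc \<Delta> =
     \<lparr>carrier = {\<phi>. (\<forall>x\<in>coHH0 sc \<Delta>. \<forall>y\<in>coHH0 sc \<Delta>. \<phi> (x + y) = \<phi> x + \<phi> y)
                  \<and> (\<forall>a. \<forall>x\<in>coHH0 sc \<Delta>. \<phi> (sc a x) = a * \<phi> x)
                  \<and> (\<forall>x. x \<notin> coHH0 sc \<Delta> \<longrightarrow> \<phi> x = 0)},
      mult = (\<lambda>\<phi> \<psi> c. \<phi> c + \<psi> c),
      one = (\<lambda>_. 0)\<rparr>"

definition cotr_data :: "('k::comm_ring_1 \<Rightarrow> 'c::ab_group_add \<Rightarrow> 'c) \<Rightarrow> ('c \<Rightarrow> ('c \<times> 'c) list)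
    \<Rightarrow> nat \<Rightarrow> (nat \<Rightarrow> 'c) set \<Rightarrow> nat \<Rightarrow> ((nat \<Rightarrow> 'c) \<Rightarrow> (nat \<Rightarrow> 'c)) \<Rightarrow> ((nat \<Rightarrow> 'c) \<Rightarrow> (nat \<Rightarrow> 'c)) \<Rightarrow> bool" where
  "cotr_data sc \<Delta> n M m i s \<longleftrightarrow>
     colinear sc \<Delta> n M m (Cn m) i \<and> inj_on i M
   \<and> colinear sc \<Delta> m (Cn m) n M s \<and> (\<forall>x\<in>M. s (i x) = x)"

text \<open>For g = i \<circ> f \<circ> s, f_c is the matrix with (j,l) entry \<epsilon>((g(c e_l))_j); its trace is
sum over l of \<epsilon>((g(c e_l))_l). Then cotr_M(f)(c) = sum \<epsilon>(c_(1)) tr(f_{c_(2)}) on coHH_0(C).\<close>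
definition cotr :: "('k::comm_ring_1 \<Rightarrow> 'c::ab_group_add \<Rightarrow> 'c) \<Rightarrow> ('c \<Rightarrow> ('c \<times> 'c) list) \<Rightarrow> ('c \<Rightarrow> 'k)
    \<Rightarrow> nat \<Rightarrow> ((nat \<Rightarrow> 'c) \<Rightarrow> (nat \<Rightarrow> 'c)) \<Rightarrow> ((nat \<Rightarrow> 'c) \<Rightarrow> (nat \<Rightarrow> 'c))
    \<Rightarrow> ((nat \<Rightarrow> 'c) \<Rightarrow> (nat \<Rightarrow> 'c)) \<Rightarrow> 'c \<Rightarrow> 'k" where
  "cotr sc \<Delta> \<epsilon> m i s f c =
     (if c \<in> coHH0 sc \<Delta> then
        sum_list (map (\<lambda>(u, v). \<epsilon> u * (\<Sum>l<m. \<epsilon> ((i (f (s (vins l v)))) l))) (\<Delta> c))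
      else 0)"

definition corank :: "('k::comm_ring_1 \<Rightarrow> 'c::ab_group_add \<Rightarrow> 'c) \<Rightarrow> ('c \<Rightarrow> ('c \<times> 'c) list) \<Rightarrow> ('c \<Rightarrow> 'k)
    \<Rightarrow> nat \<Rightarrow> ((nat \<Rightarrow> 'c) \<Rightarrow> (nat \<Rightarrow> 'c)) \<Rightarrow> ((nat \<Rightarrow> 'c) \<Rightarrow> (nat \<Rightarrow> 'c)) \<Rightarrow> 'c \<Rightarrow> 'k" where
  "corank sc \<Delta> \<epsilon> m i s = cotr sc \<Delta> \<epsilon> m i s id"

end

theory Submission
  imports Defs
begin

fun nsc :: "nat \<Rightarrow> 'g::ab_group_add \<Rightarrow> 'g" where
  "nsc 0 x = 0" | "nsc (Suc n) x = x + nsc n x"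

definition zsc :: "int \<Rightarrow> 'g::ab_group_add \<Rightarrow> 'g" where
  "zsc z x = (if 0 \<le> z then nsc (nat z) x else - nsc (nat (- z)) x)"

lemma zsc_0[simp]: "zsc 0 x = 0" by (simp add: zsc_def)

lemma zsc_plus1: "zsc (z + 1) x = zsc z x + x"
proof (cases "0 \<le> z")
  case True
  then have "nat (z+1) = Suc (nat z)" by simp
  then show ?thesis using True by (simp add: zsc_def add.commute)
next
  case False
  show ?thesis
  proof (cases "z = -1")
    case True then show ?thesis by (simp add: zsc_def)
  next
    case F2: False
    with False have "nat (- z) = Suc (nat (-(z+1)))" by simp
    then show ?thesis using False F2 by (simp add: zsc_def)
  qed
qed

lemma zsc_minus1: "zsc (z - 1) x = zsc z x - x"
  using zsc_plus1[of "z - 1" x] by (simp add: algebra_simps)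

lemma zsc_add: "zsc (a + b) x = zsc a x + zsc b x"
proof (induction b rule: int_induct[where k=0])
  case base then show ?case by simp
next
  case (step1 i)
  then show ?case using zsc_plus1[of "a+i" x] zsc_plus1[of i x] by (simp add: algebra_simps)
next
  case (step2 i)
  have e1: "zsc (a + (i - 1)) x = zsc (a+i) x - x" using zsc_minus1[of "a+i" x] by (simp add: algebra_simps)
  have e2: "zsc (i - 1) x = zsc i x - x" by (rule zsc_minus1)
  show ?case unfolding e1 e2 step2(2) by (simp add: algebra_simps)
qed

lemma zsc_1[simp]: "zsc 1 x = x" using zsc_plus1[of 0 x] by simp

lemma zsc_uminus: "zsc (- a) x = - zsc a x"
  using zsc_add[of a "-a" x] by (simp add: eq_neg_iff_add_eq_0 add.commute)

definition subgrp :: "'g::ab_group_add set \<Rightarrow> bool" where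
  "subgrp G \<longleftrightarrow> 0 \<in> G \<and> (\<forall>x\<in>G. \<forall>y\<in>G. x + y \<in> G) \<and> (\<forall>x\<in>G. - x \<in> G)"

lemma subgrp_diff: "subgrp G \<Longrightarrow> x \<in> G \<Longrightarrow> y \<in> G \<Longrightarrow> x - y \<in> G"
  unfolding subgrp_def by (metis diff_conv_add_uminus)

lemma subgrp_nsc: "subgrp G \<Longrightarrow> x \<in> G \<Longrightarrow> nsc n x \<in> G"
  by (induction n) (auto simp: subgrp_def)

lemma subgrp_zsc: "subgrp G \<Longrightarrow> x \<in> G \<Longrightarrow> zsc z x \<in> G"
  using subgrp_nsc[of G x] by (auto simp: zsc_def subgrp_def)

lemma subgrp_sum: "subgrp G \<Longrightarrow> (\<forall>i\<in>S. f i \<in> G) \<Longrightarrow> sum f S \<in> G"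
  by (induction S rule: infinite_finite_induct) (auto simp: subgrp_def)

definition supp :: "('a \<Rightarrow> int) \<Rightarrow> 'a set" where
  "supp f = {q. f q \<noteq> 0}"

definition LIN :: "('a \<Rightarrow> 'g::ab_group_add) \<Rightarrow> ('a \<Rightarrow> int) \<Rightarrow> 'g" where
  "LIN h f = (\<Sum>q\<in>supp f. zsc (f q) (h q))"

lemma LIN_super: "finite S \<Longrightarrow> supp f \<subseteq> S \<Longrightarrow> LIN h f = (\<Sum>q\<in>S. zsc (f q) (h q))"
  unfolding LIN_def by (rule sum.mono_neutral_left) (auto simp: supp_def)

lemma LIN_add:
  assumes "finite (supp f)" "finite (supp g)"
  shows "LIN h (\<lambda>q. f q + g q) = LIN h f + LIN h g"
proof -
  let ?S = "supp f \<union> supp g"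
  have "LIN h (\<lambda>q. f q + g q) = (\<Sum>q\<in>?S. zsc (f q + g q) (h q))"
    by (rule LIN_super) (use assms in \<open>auto simp: supp_def\<close>)
  also have "\<dots> = (\<Sum>q\<in>?S. zsc (f q) (h q)) + (\<Sum>q\<in>?S. zsc (g q) (h q))"
    by (simp add: zsc_add sum.distrib)
  also have "\<dots> = LIN h f + LIN h g"
    using LIN_super[of ?S f h] LIN_super[of ?S g h] assms by simp
  finally show ?thesis .
qed

lemma LIN_uminus: "LIN h (\<lambda>q. - f q) = - LIN h f"
  unfolding LIN_def supp_def by (simp add: zsc_uminus sum_negf)

lemma LIN_delta: "LIN h (delta p) = h p"
proof -
  have "LIN h (delta p) = (\<Sum>q\<in>{p}. zsc (delta p q) (h q))"
    by (rule LIN_super) (auto simp: supp_def delta_def)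
  then show ?thesis by (simp add: delta_def)
qed

lemma supp_delta: "finite (supp (delta p))"
  by (rule finite_subset[of _ "{p}"]) (auto simp: supp_def delta_def)

lemma supp_add: "finite (supp f) \<Longrightarrow> finite (supp g) \<Longrightarrow> finite (supp (\<lambda>q. f q + g q))"
  by (rule finite_subset[of _ "supp f \<union> supp g"]) (auto simp: supp_def)

lemma supp_uminus: "supp (\<lambda>q. - f q) = supp f"
  by (auto simp: supp_def)

lemma LIN_diff:
  assumes "finite (supp f)" "finite (supp g)"
  shows "LIN h (\<lambda>q. f q - g q) = LIN h f - LIN h g"
  using LIN_add[of f "\<lambda>q. - g q" h] assms by (simp add: supp_uminus LIN_uminus)

lemma supp_diff: "finite (supp f) \<Longrightarrow> finite (supp g) \<Longrightarrow> finite (supp (\<lambda>q. f q - g q))"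
  by (rule finite_subset[of _ "supp f \<union> supp g"]) (auto simp: supp_def)

lemma LIN_d3: "LIN h (\<lambda>q. delta a q - delta b q - delta c q) = h a - h b - h c"
  by (simp add: LIN_diff supp_diff supp_delta LIN_delta)

lemma LIN_d2: "LIN h (\<lambda>q. delta a q - delta b q) = h a - h b"
  by (simp add: LIN_diff supp_diff supp_delta LIN_delta)

lemma supp_d3: "finite (supp (\<lambda>q. delta a q - delta b q - delta c q))"
  by (simp add: supp_diff supp_delta)
lemma supp_d2: "finite (supp (\<lambda>q. delta a q - delta b q))"
  by (simp add: supp_diff supp_delta)

lemma tzero_LIN:
  assumes f: "f \<in> tzero sa sb" and G: "subgrp G"
    and h1: "\<And>x x' y. h (x + x', y) - h (x, y) - h (x', y) \<in> G"
    and h2: "\<And>x y y'. h (x, y + y') - h (x, y) - h (x, y') \<in> G"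
    and h3: "\<And>a x y. h (sa a x, y) - h (x, sb a y) \<in> G"
  shows "finite (supp f) \<and> LIN h f \<in> G"
  using f
proof (induction rule: tzero.induct)
  case tz0
  then show ?case using G by (simp add: supp_def LIN_def subgrp_def)
next
  case (tzaddl x x' y)
  then show ?case using h1 by (simp add: LIN_d3 supp_d3)
next
  case (tzaddr x y y')
  then show ?case using h2 by (simp add: LIN_d3 supp_d3)
next
  case (tzbal a x y)
  then show ?case using h3 by (simp add: LIN_d2 supp_d2)
next
  case (tzplus f g)
  then show ?case using G by (simp add: LIN_add supp_add subgrp_def)
next
  case (tzuminus f)
  then show ?case using G by (simp add: LIN_uminus supp_uminus subgrp_def)
qed

lemma supp_count: "finite (supp (\<lambda>q. int (count_list L q)))"
  by (rule finite_subset[of _ "set L"]) (auto simp: supp_def count_list_0_iff)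

lemma count_Cons_delta: "(\<lambda>q. int (count_list (x # L) q)) = (\<lambda>q. delta x q + int (count_list L q))"
  by (auto simp: delta_def)

lemma LIN_count: "LIN h (\<lambda>q. int (count_list L q)) = sum_list (map h L)"
proof (induction L)
  case Nil then show ?case by (simp add: LIN_def supp_def)
next
  case (Cons x L)
  then show ?case by (simp only: count_Cons_delta LIN_add supp_delta supp_count LIN_delta) simp
qed

lemma teq_univ_G:
  assumes "tensor_eq sa sb L1 L2" and G: "subgrp G"
    and h1: "\<And>x x' y. h (x + x', y) - h (x, y) - h (x', y) \<in> G"
    and h2: "\<And>x y y'. h (x, y + y') - h (x, y) - h (x, y') \<in> G"
    and h3: "\<And>a x y. h (sa a x, y) - h (x, sb a y) \<in> G"
  shows "sum_list (map h L1) - sum_list (map h L2) \<in> G"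
proof -
  have "LIN h (\<lambda>q. int (count_list L1 q) - int (count_list L2 q)) \<in> G"
    using tzero_LIN[OF assms(1)[unfolded tensor_eq_def] G h1 h2 h3] by blast
  then show ?thesis by (simp add: LIN_diff supp_count LIN_count)
qed

lemma teq_univ:
  fixes h :: "_ \<Rightarrow> 'g::ab_group_add"
  assumes "tensor_eq sa sb L1 L2"
    and h1: "\<And>x x' y. h (x + x', y) = h (x, y) + h (x', y)"
    and h2: "\<And>x y y'. h (x, y + y') = h (x, y) + h (x, y')"
    and h3: "\<And>a x y. h (sa a x, y) = h (x, sb a y)"
  shows "sum_list (map h L1) = sum_list (map h L2)"
proof -
  have G: "subgrp {0::'g}" by (simp add: subgrp_def)
  show ?thesis using teq_univ_G[OF assms(1) G, of h] h1 h2 h3 by simp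
qed

lemma subgrp_tzero: "subgrp (tzero sa sb)"
  unfolding subgrp_def zero_fun_def plus_fun_def fun_Compl_def by (auto intro: tzero.intros)

lemma sum_list_delta: "sum_list (map (\<lambda>p. delta (F p)) L) = (\<lambda>q. int (count_list (map F L) q))"
  by (induction L) (auto simp: delta_def fun_eq_iff)

lemma teq_push_gen:
  assumes "tensor_eq sa sb L1 L2"
    and h1: "\<And>x x' y. (\<lambda>q. delta (F (x + x', y)) q - delta (F (x, y)) q - delta (F (x', y)) q) \<in> tzero sa' sb'"
    and h2: "\<And>x y y'. (\<lambda>q. delta (F (x, y + y')) q - delta (F (x, y)) q - delta (F (x, y')) q) \<in> tzero sa' sb'"
    and h3: "\<And>a x y. (\<lambda>q. delta (F (sa a x, y)) q - delta (F (x, sb a y)) q) \<in> tzero sa' sb'"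
  shows "tensor_eq sa' sb' (map F L1) (map F L2)"
proof -
  have "sum_list (map (\<lambda>p. delta (F p)) L1) - sum_list (map (\<lambda>p. delta (F p)) L2) \<in> tzero sa' sb'"
    by (rule teq_univ_G[OF assms(1) subgrp_tzero]) (use h1 h2 h3 in \<open>simp_all add: fun_diff_def\<close>)
  then show ?thesis unfolding tensor_eq_def sum_list_delta by (simp add: fun_diff_def)
qed

lemma teq_push:
  assumes "tensor_eq sa sb L1 L2"
    and "\<And>x x'. F1 (x + x') = F1 x + F1 x'" and "\<And>y y'. F2 (y + y') = F2 y + F2 y'"
    and "\<And>a x. F1 (sa a x) = sa' a (F1 x)" and "\<And>a y. F2 (sb a y) = sb' a (F2 y)"
  shows "tensor_eq sa' sb' (map (\<lambda>(x, y). (F1 x, F2 y)) L1) (map (\<lambda>(x, y). (F1 x, F2 y)) L2)"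
  by (rule teq_push_gen[OF assms(1)]) (simp_all add: assms tzaddl tzaddr tzbal)

lemma teq_refl: "tensor_eq sa sb L L"
  unfolding tensor_eq_def using tz0 by simp

lemma teq_sym: "tensor_eq sa sb A B \<Longrightarrow> tensor_eq sa sb B A"
  unfolding tensor_eq_def using tzuminus by fastforce

lemma teq_trans: "tensor_eq sa sb A B \<Longrightarrow> tensor_eq sa sb B C \<Longrightarrow> tensor_eq sa sb A C"
  unfolding tensor_eq_def using tzplus by fastforce

lemma teq_count: "(\<And>q. count_list A q = count_list B q) \<Longrightarrow> tensor_eq sa sb A B"
  unfolding tensor_eq_def using tz0 by simp

lemma teq_append: "tensor_eq sa sb A B \<Longrightarrow> tensor_eq sa sb C D \<Longrightarrow> tensor_eq sa sb (A @ C) (B @ D)"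
  unfolding tensor_eq_def by (drule (1) tzplus) (simp add: algebra_simps)

lemma teq_cancel: "tensor_eq sa sb (A @ C) (B @ C) \<Longrightarrow> tensor_eq sa sb A B"
  unfolding tensor_eq_def by simp

lemma teq_Cons: "tensor_eq sa sb [a] [b] \<Longrightarrow> tensor_eq sa sb A B \<Longrightarrow> tensor_eq sa sb (a # A) (b # B)"
  using teq_append[of sa sb "[a]" "[b]" A B] by simp

lemma teq_concat_cong:
  "(\<And>p. p \<in> set L \<Longrightarrow> tensor_eq sa sb (F p) (G p)) \<Longrightarrow> tensor_eq sa sb (concat (map F L)) (concat (map G L))"
  by (induction L) (auto intro: teq_append teq_refl)

lemma teq_map_cong:
  "(\<And>p. p \<in> set L \<Longrightarrow> tensor_eq sa sb [F p] [G p]) \<Longrightarrow> tensor_eq sa sb (map F L) (map G L)"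
  by (induction L) (auto intro: teq_Cons teq_refl)

lemma teq_rel_eq: "f \<in> tzero sa sb \<Longrightarrow> f = (\<lambda>q. int (count_list A q) - int (count_list B q)) \<Longrightarrow> tensor_eq sa sb A B"
  unfolding tensor_eq_def by simp

lemma teq_addl: "tensor_eq sa sb [(x + x', y)] [(x, y), (x', y)]"
  by (rule teq_rel_eq[OF tzaddl[of x x' y]]) (auto simp: delta_def fun_eq_iff)

lemma teq_addr: "tensor_eq sa sb [(x, y + y')] [(x, y), (x, y')]"
  by (rule teq_rel_eq[OF tzaddr[of x y y']]) (auto simp: delta_def fun_eq_iff)

lemma teq_bal: "tensor_eq sa sb [(sa a x, y)] [(x, sb a y)]"
  by (rule teq_rel_eq[OF tzbal[of sa a x y sb]]) (auto simp: delta_def fun_eq_iff)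

lemma teq_zero_r: "tensor_eq sa sb [(x, 0)] []"
proof -
  have "tensor_eq sa sb [(x, 0 + 0)] [(x, 0), (x, 0)]" by (rule teq_addr)
  then have "tensor_eq sa sb ([] @ [(x, 0)]) ([(x, 0)] @ [(x, 0)])" by simp
  then have "tensor_eq sa sb [] [(x, 0)]" by (rule teq_cancel)
  then show ?thesis by (rule teq_sym)
qed

lemma teq_zero_l: "tensor_eq sa sb [(0, y)] []"
proof -
  have "tensor_eq sa sb [(0 + 0, y)] [(0, y), (0, y)]" by (rule teq_addl)
  then have "tensor_eq sa sb ([] @ [(0, y)]) ([(0, y)] @ [(0, y)])" by simp
  then have "tensor_eq sa sb [] [(0, y)]" by (rule teq_cancel)
  then show ?thesis by (rule teq_sym)
qed

lemma teq_map_zero: "(\<And>p. p \<in> set L \<Longrightarrow> snd (F p) = 0) \<Longrightarrow> tensor_eq sa sb (map F L) []"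
proof (induction L)
  case Nil then show ?case by (simp add: teq_refl)
next
  case (Cons a L)
  have h: "tensor_eq sa sb [F a] []" using teq_zero_r[of sa sb "fst (F a)"] Cons.prems[of a]
    by (metis list.set_intros(1) prod.collapse)
  then show ?case using teq_append[OF h Cons.IH] Cons.prems by simp
qed

lemma teq_map_split:
  "tensor_eq sa sb (map (\<lambda>p. (F p, G1 p + G2 p)) L) (map (\<lambda>p. (F p, G1 p)) L @ map (\<lambda>p. (F p, G2 p)) L)"
proof (induction L)
  case Nil then show ?case by (simp add: teq_refl)
next
  case (Cons a L)
  have "tensor_eq sa sb ([(F a, G1 a + G2 a)] @ map (\<lambda>p. (F p, G1 p + G2 p)) L)
     ([(F a, G1 a), (F a, G2 a)] @ (map (\<lambda>p. (F p, G1 p)) L @ map (\<lambda>p. (F p, G2 p)) L))"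
    by (rule teq_append[OF teq_addr Cons.IH])
  moreover have "tensor_eq sa sb ([(F a, G1 a), (F a, G2 a)] @ (map (\<lambda>p. (F p, G1 p)) L @ map (\<lambda>p. (F p, G2 p)) L))
      (map (\<lambda>p. (F p, G1 p)) (a # L) @ map (\<lambda>p. (F p, G2 p)) (a # L))"
    by (rule teq_count) simp
  ultimately show ?case by (simp add: teq_trans)
qed

lemma teq_swap:
  assumes "tensor_eq sc sc L1 L2"
  shows "tensor_eq sc sc (map (\<lambda>(u, v). (v, u)) L1) (map (\<lambda>(u, v). (v, u)) L2)"
proof (rule teq_push_gen[OF assms])
  fix x x' y
  show "(\<lambda>q. delta (case (x + x', y) of (u, v) \<Rightarrow> (v, u)) q - delta (case (x, y) of (u, v) \<Rightarrow> (v, u)) q -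
          delta (case (x', y) of (u, v) \<Rightarrow> (v, u)) q) \<in> tzero sc sc"
    using tzaddr[of y x x' sc sc] by simp
next
  fix x y y'
  show "(\<lambda>q. delta (case (x, y + y') of (u, v) \<Rightarrow> (v, u)) q - delta (case (x, y) of (u, v) \<Rightarrow> (v, u)) q -
          delta (case (x, y') of (u, v) \<Rightarrow> (v, u)) q) \<in> tzero sc sc"
    using tzaddl[of y y' x sc sc] by simp
next
  fix a x y
  have "(\<lambda>q. - (delta (sc a y, x) q - delta (y, sc a x) q)) \<in> tzero sc sc"
    by (rule tzuminus[OF tzbal])
  then show "(\<lambda>q. delta (case (sc a x, y) of (u, v) \<Rightarrow> (v, u)) q - delta (case (x, sc a y) of (u, v) \<Rightarrow> (v, u)) q) \<in> tzero sc sc"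
    by simp
qed

locale coalg =
  fixes sc :: "'k::comm_ring_1 \<Rightarrow> 'c::ab_group_add \<Rightarrow> 'c"
    and \<Delta> :: "'c \<Rightarrow> ('c \<times> 'c) list"
    and \<epsilon> :: "'c \<Rightarrow> 'k"
  assumes coalg: "coalgebra sc \<Delta> \<epsilon>"
begin

lemmas C = coalg[unfolded coalgebra_def]

lemma sc_add: "sc a (x + y) = sc a x + sc a y" using C[THEN conjunct1] by blast
lemma sc_addk: "sc (a + b) x = sc a x + sc b x" using C[THEN conjunct2, THEN conjunct1] by blast
lemma sc_mult: "sc a (sc b x) = sc (a * b) x" using C[THEN conjunct2, THEN conjunct2, THEN conjunct1] by blast
lemma sc_one[simp]: "sc 1 x = x" using C[THEN conjunct2, THEN conjunct2, THEN conjunct2, THEN conjunct1] by blast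
lemma eps_add: "\<epsilon> (x + y) = \<epsilon> x + \<epsilon> y" using C[THEN conjunct2, THEN conjunct2, THEN conjunct2, THEN conjunct2, THEN conjunct1] by blast
lemma eps_sc: "\<epsilon> (sc a x) = a * \<epsilon> x" using C[THEN conjunct2, THEN conjunct2, THEN conjunct2, THEN conjunct2, THEN conjunct2, THEN conjunct1] by blast
lemma Delta_add: "tensor_eq sc sc (\<Delta> (x + y)) (\<Delta> x @ \<Delta> y)" using C[THEN conjunct2, THEN conjunct2, THEN conjunct2, THEN conjunct2, THEN conjunct2, THEN conjunct2, THEN conjunct1] by blast
lemma Delta_sc: "tensor_eq sc sc (\<Delta> (sc a x)) (map (\<lambda>(u, v). (sc a u, v)) (\<Delta> x))"
  using C[THEN conjunct2, THEN conjunct2, THEN conjunct2, THEN conjunct2, THEN conjunct2, THEN conjunct2, THEN conjunct2, THEN conjunct1] by blast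
lemma counit_l: "sum_list (map (\<lambda>(u, v). sc (\<epsilon> u) v) (\<Delta> c)) = c" by (rule C[THEN conjunct2, THEN conjunct2, THEN conjunct2, THEN conjunct2, THEN conjunct2, THEN conjunct2, THEN conjunct2, THEN conjunct2, THEN conjunct2, THEN conjunct1, THEN spec])
lemma counit_r: "sum_list (map (\<lambda>(u, v). sc (\<epsilon> v) u) (\<Delta> c)) = c" by (rule C[THEN conjunct2, THEN conjunct2, THEN conjunct2, THEN conjunct2, THEN conjunct2, THEN conjunct2, THEN conjunct2, THEN conjunct2, THEN conjunct2, THEN conjunct2, THEN spec])

lemma dbl0: "(y::'g::ab_group_add) + y = y \<Longrightarrow> y = 0" by (metis add_cancel_right_right)
lemma sc_zero[simp]: "sc a 0 = 0" by (rule dbl0) (metis sc_add add_0_right)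
lemma sc_zerok[simp]: "sc 0 x = 0" by (rule dbl0) (metis sc_addk add_0_right)
lemma eps_zero[simp]: "\<epsilon> 0 = 0" by (rule dbl0) (metis eps_add add_0_right)
lemma sc_uminus: "sc a (- x) = - sc a x" by (metis add.right_inverse minus_unique sc_add sc_zero)
lemma sc_diff: "sc a (x - y) = sc a x - sc a y" by (simp only: diff_conv_add_uminus sc_add sc_uminus)
lemma eps_uminus: "\<epsilon> (- x) = - \<epsilon> x" by (metis add.right_inverse minus_unique eps_add eps_zero)
lemma eps_diff: "\<epsilon> (x - y) = \<epsilon> x - \<epsilon> y" by (simp only: diff_conv_add_uminus eps_add eps_uminus)
lemma sc_comm: "sc a (sc b x) = sc b (sc a x)" by (simp add: sc_mult mult.commute)

lemma sc_sum_list: "sc a (sum_list (map f L)) = sum_list (map (\<lambda>p. sc a (f p)) L)"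
  by (induction L) (simp_all add: sc_add)
lemma eps_sum_list: "\<epsilon> (sum_list (map f L)) = sum_list (map (\<lambda>p. \<epsilon> (f p)) L)"
  by (induction L) (simp_all add: eps_add)
lemma eps_sum: "\<epsilon> (sum f S) = (\<Sum>i\<in>S. \<epsilon> (f i))"
  by (induction S rule: infinite_finite_induct) (simp_all add: eps_add)
lemma sc_sum: "sc a (sum f S) = (\<Sum>i\<in>S. sc a (f i))"
  by (induction S rule: infinite_finite_induct) (simp_all add: sc_add)

lemma Delta0: "tensor_eq sc sc (\<Delta> 0) []"
proof -
  have "tensor_eq sc sc (\<Delta> (0 + 0)) (\<Delta> 0 @ \<Delta> 0)" by (rule Delta_add)
  then have "tensor_eq sc sc ([] @ \<Delta> 0) (\<Delta> 0 @ \<Delta> 0)" by simp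
  then have "tensor_eq sc sc [] (\<Delta> 0)" by (rule teq_cancel)
  then show ?thesis by (rule teq_sym)
qed

lemma vadd_eq[simp]: "vadd x y = x + y" by (simp add: vadd_def plus_fun_def)
lemma vzero_eq[simp]: "vzero = 0" by (simp add: vzero_def zero_fun_def)

lemma vscale_app[simp]: "vscale sc a x i = sc a (x i)" by (simp add: vscale_def)
lemma vscale_add: "vscale sc a (x + y) = vscale sc a x + vscale sc a y" by (simp add: fun_eq_iff sc_add)
lemma vscale_zero[simp]: "vscale sc a 0 = 0" by (simp add: fun_eq_iff)
lemma vscale_zerok[simp]: "vscale sc 0 x = 0" by (simp add: fun_eq_iff)
lemma vscale_one[simp]: "vscale sc 1 x = x" by (simp add: fun_eq_iff)
lemma vscale_mult: "vscale sc a (vscale sc b x) = vscale sc (a * b) x" by (simp add: fun_eq_iff sc_mult)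
lemma vscale_addk: "vscale sc (a + b) x = vscale sc a x + vscale sc b x" by (simp add: fun_eq_iff sc_addk)

lemma vins_app: "vins l v j = (if j = l then v else 0)" by (simp add: vins_def)
lemma vins_add: "vins l (u + v) = vins l u + vins l v" by (simp add: vins_def fun_eq_iff)
lemma vins_zero[simp]: "vins l 0 = 0" by (simp add: vins_def fun_eq_iff)
lemma vins_sc: "vins l (sc a v) = vscale sc a (vins l v)" by (simp add: vins_def fun_eq_iff)

lemma Cn_add: "x \<in> Cn n \<Longrightarrow> y \<in> Cn n \<Longrightarrow> x + y \<in> Cn n" by (simp add: Cn_def)
lemma Cn_zero[simp]: "0 \<in> Cn n" by (simp add: Cn_def)
lemma Cn_sc: "x \<in> Cn n \<Longrightarrow> vscale sc a x \<in> Cn n" by (simp add: Cn_def)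
lemma Cn_vins: "l < n \<Longrightarrow> vins l v \<in> Cn n" by (simp add: Cn_def vins_def)
lemma Cn_sum: "(\<And>i. i \<in> S \<Longrightarrow> f i \<in> Cn n) \<Longrightarrow> sum f S \<in> Cn n"
  by (induction S rule: infinite_finite_induct) (auto intro: Cn_add)
lemma Cn_sum_list: "(\<And>p. p \<in> set L \<Longrightarrow> f p \<in> Cn n) \<Longrightarrow> sum_list (map f L) \<in> Cn n"
  by (induction L) (auto intro: Cn_add)

lemma sum_app: "(sum f S :: nat \<Rightarrow> 'c) j = (\<Sum>i\<in>S. f i j)"
  by (induction S rule: infinite_finite_induct) simp_all
lemma sum_list_app: "(sum_list (map f L) :: nat \<Rightarrow> 'c) j = sum_list (map (\<lambda>p. f p j) L)"
  by (induction L) simp_all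

lemma Cn_decomp: "(x :: nat \<Rightarrow> 'c) \<in> Cn n \<Longrightarrow> x = (\<Sum>k<n. vins k (x k))"
proof (rule ext)
  fix j assume x: "x \<in> Cn n"
  have "(\<Sum>k<n. vins k (x k)) j = (\<Sum>k<n. if j = k then x k else 0)" unfolding sum_app by (simp add: vins_app)
  also have "\<dots> = (if j < n then x j else 0)" by (simp add: sum.delta)
  also have "\<dots> = x j" using x by (simp add: Cn_def)
  finally show "x j = (\<Sum>k<n. vins k (x k)) j" by simp
qed

definition lin_on :: "(nat \<Rightarrow> 'c) set \<Rightarrow> ((nat \<Rightarrow> 'c) \<Rightarrow> (nat \<Rightarrow> 'c)) \<Rightarrow> bool" where
  "lin_on S F \<longleftrightarrow> (\<forall>x\<in>S. \<forall>y\<in>S. F (x + y) = F x + F y) \<and> (\<forall>a. \<forall>x\<in>S. F (vscale sc a x) = vscale sc a (F x))"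

lemma colinear_lin: "colinear sc \<Delta> n A m B f \<Longrightarrow> lin_on A f"
  unfolding colinear_def lin_on_def by simp

lemma lin_on_zero: "lin_on S F \<Longrightarrow> 0 \<in> S \<Longrightarrow> F 0 = 0"
  unfolding lin_on_def by (metis add_cancel_left_right add_0)

lemma lin_on_sum:
  assumes "lin_on (Cn n) F" "\<And>i. i \<in> S \<Longrightarrow> f i \<in> Cn n"
  shows "F (sum f S) = (\<Sum>i\<in>S. F (f i))"
  using assms(2)
proof (induction S rule: infinite_finite_induct)
  case (infinite S) then show ?case using lin_on_zero[OF assms(1) Cn_zero] by (simp add: zero_fun_def)
next
  case empty then show ?case using lin_on_zero[OF assms(1) Cn_zero] by (simp add: zero_fun_def)
next
  case (insert x S)
  have h: "F (f x + sum f S) = F (f x) + F (sum f S)"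
    using assms(1) insert.prems Cn_sum[of S f n] unfolding lin_on_def by simp
  have ih: "F (sum f S) = (\<Sum>i\<in>S. F (f i))" using insert.IH insert.prems by simp
  show ?case unfolding sum.insert[OF insert.hyps(1) insert.hyps(2)] h ih by (rule refl)
qed

lemma lin_on_sum_list:
  assumes "lin_on (Cn n) F" "\<And>p. p \<in> set L \<Longrightarrow> f p \<in> Cn n"
  shows "F (sum_list (map f L)) = sum_list (map (\<lambda>p. F (f p)) L)"
  using assms(2)
proof (induction L)
  case Nil then show ?case using lin_on_zero[OF assms(1) Cn_zero] by (simp add: zero_fun_def)
next
  case (Cons x L)
  have h: "F (f x + sum_list (map f L)) = F (f x) + F (sum_list (map f L))"
    using assms(1) Cons.prems Cn_sum_list[of L f n] unfolding lin_on_def by simp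
  have ih: "F (sum_list (map f L)) = sum_list (map (\<lambda>p. F (f p)) L)" using Cons.IH Cons.prems by simp
  show ?case unfolding list.map sum_list.Cons h ih by (rule refl)
qed

lemma lin_on_sc: "lin_on S F \<Longrightarrow> x \<in> S \<Longrightarrow> F (vscale sc a x) = vscale sc a (F x)"
  unfolding lin_on_def by blast

lemma teq_push_CV:
  assumes "tensor_eq sc sc L1 L2"
    and "\<And>v v'. F (v + v') = F v + F v'" and "\<And>a v. F (sc a v) = vscale sc a (F v)"
  shows "tensor_eq sc (vscale sc) (map (\<lambda>(u, v). (u, F v)) L1) (map (\<lambda>(u, v). (u, F v)) L2)"
  using teq_push[OF assms(1), of id F sc "vscale sc"] assms by simp

lemma teq_push_VV:
  assumes "tensor_eq sc (vscale sc) L1 L2"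
    and "\<And>v v'. F (v + v') = F v + F v'" and "\<And>a v. F (vscale sc a v) = vscale sc a (F v)"
  shows "tensor_eq sc (vscale sc) (map (\<lambda>(u, v). (u, F v)) L1) (map (\<lambda>(u, v). (u, F v)) L2)"
  using teq_push[OF assms(1), of id F sc "vscale sc"] assms by simp

lemma coact_vins:
  assumes "l < n"
  shows "tensor_eq sc (vscale sc) (map (\<lambda>(u, v). (u, vins l v)) (\<Delta> c)) (coact \<Delta> n (vins l c))"
proof -
  define blk where "blk = (\<lambda>i. map (\<lambda>(u, v). (u, vins i v)) (\<Delta> (vins l c i)))"
  define blk' where "blk' = (\<lambda>i. if i = l then map (\<lambda>(u, v). (u, vins l v)) (\<Delta> c) else [])"
  have "coact \<Delta> n (vins l c) = concat (map blk [0..<n])" by (simp add: coact_def blk_def)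
  moreover have "tensor_eq sc (vscale sc) (concat (map blk [0..<n])) (concat (map blk' [0..<n]))"
  proof (rule teq_concat_cong)
    fix i assume "i \<in> set [0..<n]"
    show "tensor_eq sc (vscale sc) (blk i) (blk' i)"
    proof (cases "i = l")
      case True then show ?thesis by (simp add: blk_def blk'_def vins_app teq_refl)
    next
      case False
      have "tensor_eq sc (vscale sc) (map (\<lambda>(u, v). (u, vins i v)) (\<Delta> 0)) (map (\<lambda>(u, v). (u, vins i v)) [])"
        by (rule teq_push_CV[OF Delta0]) (simp_all add: vins_add vins_sc)
      then show ?thesis using False by (simp add: blk_def blk'_def vins_app)
    qed
  qed
  moreover have "concat (map blk' [0..<n]) = map (\<lambda>(u, v). (u, vins l v)) (\<Delta> c)"
  proof -
    have "[0..<n] = [0..<l] @ [l..<n]" using upt_add_eq_append[of 0 l "n - l"] assms by simp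
    moreover have "[l..<n] = [l] @ [Suc l..<n]" using upt_conv_Cons[OF assms] by simp
    ultimately have A: "[0..<n] = [0..<l] @ [l] @ [Suc l..<n]" by simp
    have B1: "concat (map blk' [0..<l]) = []" by (simp add: blk'_def)
    have B2: "concat (map blk' [Suc l..<n]) = []" by (simp add: blk'_def)
    have B3: "blk' l = map (\<lambda>(u, v). (u, vins l v)) (\<Delta> c)" by (simp add: blk'_def)
    have e: "concat (map blk' ([0..<l] @ [l] @ [Suc l..<n])) = concat (map blk' [0..<l]) @ blk' l @ concat (map blk' [Suc l..<n])" by simp
    show ?thesis unfolding A e B1 B2 B3 by simp
  qed
  ultimately show ?thesis by (metis teq_sym)
qed

end

lemma sum_sum_list: "(\<Sum>k\<in>K. sum_list (map (f k) L)) = sum_list (map (\<lambda>p. \<Sum>k\<in>K. f k p) L)"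
  by (induction L) (simp_all add: sum.distrib)

lemma sum_list_upt_sum: "sum_list (map f [0..<n]) = (\<Sum>i<n. f i)"
  by (simp add: sum_set_upt_conv_sum_list_nat[symmetric] atLeast0LessThan)

lemma sum_list_concat_map: "sum_list (map h (concat xss)) = sum_list (map (\<lambda>xs. sum_list (map h xs)) xss)"
  by (induction xss) simp_all

lemma sum_list_zero: "(\<And>p. p \<in> set L \<Longrightarrow> f p = 0) \<Longrightarrow> sum_list (map f L) = 0"
  by (induction L) auto

context coalg begin

lemma colinear_comp:
  assumes F: "colinear sc \<Delta> n A m B f" and G: "colinear sc \<Delta> m B p D g"
  shows "colinear sc \<Delta> n A p D (\<lambda>x. g (f x))"
proof -
  have f1: "\<forall>x\<in>A. f x \<in> B" and f2: "\<forall>x\<in>A. \<forall>y\<in>A. f (x + y) = f x + f y"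
    and f3: "\<forall>a. \<forall>x\<in>A. f (vscale sc a x) = vscale sc a (f x)"
    and f4: "\<forall>x\<in>A. \<forall>L. set L \<subseteq> UNIV \<times> A \<and> tensor_eq sc (vscale sc) L (coact \<Delta> n x) \<longrightarrow>
      tensor_eq sc (vscale sc) (map (\<lambda>(u, y). (u, f y)) L) (coact \<Delta> m (f x))"
    using F unfolding colinear_def by auto
  have g1: "\<forall>x\<in>B. g x \<in> D" and g2: "\<forall>x\<in>B. \<forall>y\<in>B. g (x + y) = g x + g y"
    and g3: "\<forall>a. \<forall>x\<in>B. g (vscale sc a x) = vscale sc a (g x)"
    and g4: "\<forall>x\<in>B. \<forall>L. set L \<subseteq> UNIV \<times> B \<and> tensor_eq sc (vscale sc) L (coact \<Delta> m x) \<longrightarrow>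
      tensor_eq sc (vscale sc) (map (\<lambda>(u, y). (u, g y)) L) (coact \<Delta> p (g x))"
    using G unfolding colinear_def by auto
  have c4: "tensor_eq sc (vscale sc) (map (\<lambda>(u, y). (u, g (f y))) L) (coact \<Delta> p (g (f x)))"
    if x: "x \<in> A" and L: "set L \<subseteq> UNIV \<times> A" "tensor_eq sc (vscale sc) L (coact \<Delta> n x)" for x L
  proof -
    have t: "tensor_eq sc (vscale sc) (map (\<lambda>(u, y). (u, f y)) L) (coact \<Delta> m (f x))" using f4 x L by blast
    have s: "set (map (\<lambda>(u, y). (u, f y)) L) \<subseteq> UNIV \<times> B" using L f1 by auto
    have "tensor_eq sc (vscale sc) (map (\<lambda>(u, y). (u, g y)) (map (\<lambda>(u, y). (u, f y)) L)) (coact \<Delta> p (g (f x)))"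
      using g4 f1 x t s by blast
    then show ?thesis by (simp add: case_prod_unfold comp_def)
  qed
  show ?thesis unfolding colinear_def using f1 f2 f3 g1 g2 g3 c4 by (auto simp: Cn_def)
qed

lemma colinear_id: "subcomodule sc \<Delta> n A \<Longrightarrow> colinear sc \<Delta> n A n A (\<lambda>x. x)"
  unfolding colinear_def by simp

lemma sum_list_coact:
  "sum_list (map h (coact \<Delta> n z)) = (\<Sum>i<n. sum_list (map (\<lambda>(u, v). h (u, vins i v)) (\<Delta> (z i))))"
  unfolding coact_def by (simp add: sum_list_concat_map comp_def sum_list_upt_sum case_prod_unfold)

lemma KF:
  assumes g: "colinear sc \<Delta> n A n' B g" and B: "B \<subseteq> Cn n'" and x: "x \<in> A"
    and L: "set L \<subseteq> UNIV \<times> A" "tensor_eq sc (vscale sc) L (coact \<Delta> n x)"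
  shows "g x j = sum_list (map (\<lambda>(u, y). sc (\<epsilon> (g y j)) u) L)"
proof -
  have t: "tensor_eq sc (vscale sc) (map (\<lambda>(u, y). (u, g y)) L) (coact \<Delta> n' (g x))"
    using g x L unfolding colinear_def by blast
  define h where "h = (\<lambda>(u::'c, y::nat \<Rightarrow> 'c). sc (\<epsilon> (y j)) u)"
  have "sum_list (map h (map (\<lambda>(u, y). (u, g y)) L)) = sum_list (map h (coact \<Delta> n' (g x)))"
    by (rule teq_univ[OF t]) (simp_all add: h_def eps_add sc_addk sc_add eps_sc sc_mult mult.commute)
  moreover have "sum_list (map h (map (\<lambda>(u, y). (u, g y)) L)) = sum_list (map (\<lambda>(u, y). sc (\<epsilon> (g y j)) u) L)"
    by (simp add: h_def case_prod_unfold comp_def)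
  moreover have "sum_list (map h (coact \<Delta> n' (g x))) = g x j"
  proof -
    have gx: "g x \<in> Cn n'" using g x B unfolding colinear_def by blast
    have "sum_list (map h (coact \<Delta> n' (g x))) = (\<Sum>i<n'. sum_list (map (\<lambda>(u, v). sc (\<epsilon> (vins i v j)) u) (\<Delta> (g x i))))"
      by (simp add: sum_list_coact h_def)
    also have "\<dots> = (\<Sum>i<n'. if i = j then g x j else 0)"
    proof (rule sum.cong[OF refl])
      fix i
      show "sum_list (map (\<lambda>(u, v). sc (\<epsilon> (vins i v j)) u) (\<Delta> (g x i))) = (if i = j then g x j else 0)"
      proof (cases "i = j")
        case True then show ?thesis using counit_r[of "g x j"] by (simp add: vins_app)
      next
        case False then show ?thesis by (simp add: vins_app sum_list_zero case_prod_unfold)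
      qed
    qed
    also have "\<dots> = g x j" using gx by (auto simp: Cn_def)
    finally show ?thesis .
  qed
  ultimately show ?thesis by simp
qed

lemma KF1:
  assumes g: "colinear sc \<Delta> n (Cn n) n' B g" and B: "B \<subseteq> Cn n'" and l: "l < n"
  shows "g (vins l c) j = sum_list (map (\<lambda>(u, v). sc (\<epsilon> (g (vins l v) j)) u) (\<Delta> c))"
proof -
  have "g (vins l c) j = sum_list (map (\<lambda>(u, y). sc (\<epsilon> (g y j)) u) (map (\<lambda>(u, v). (u, vins l v)) (\<Delta> c)))"
    by (rule KF[OF g B Cn_vins[OF l]]) (auto simp: Cn_vins[OF l] coact_vins[OF l])
  then show ?thesis by (simp add: case_prod_unfold comp_def)
qed

end

context coalg begin

definition Phi :: "((nat \<Rightarrow> 'c) \<Rightarrow> (nat \<Rightarrow> 'c)) \<Rightarrow> nat \<Rightarrow> nat \<Rightarrow> 'c \<Rightarrow> 'k" where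
  "Phi F j l v = \<epsilon> (F (vins l v) j)"

lemma Phi_add: "lin_on (Cn n) F \<Longrightarrow> l < n \<Longrightarrow> Phi F j l (u + v) = Phi F j l u + Phi F j l v"
  unfolding Phi_def lin_on_def by (simp add: vins_add Cn_vins eps_add)

lemma Phi_sc: "lin_on (Cn n) F \<Longrightarrow> l < n \<Longrightarrow> Phi F j l (sc a u) = a * Phi F j l u"
  unfolding Phi_def lin_on_def by (simp add: vins_sc Cn_vins eps_sc)

lemma Phi_zero: "lin_on (Cn n) F \<Longrightarrow> l < n \<Longrightarrow> Phi F j l 0 = 0"
  using Phi_sc[of n F l j 0 0] by simp

lemma Phi_sum_list: "lin_on (Cn n) F \<Longrightarrow> l < n \<Longrightarrow> Phi F j l (sum_list (map f L)) = sum_list (map (\<lambda>p. Phi F j l (f p)) L)"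
  by (induction L) (simp_all add: Phi_add Phi_zero)

lemma vins_sum_list: "vins k (sum_list (map f L)) = sum_list (map (\<lambda>p. vins k (f p)) L)"
  by (induction L) (simp_all add: vins_add)

lemma KF1':
  assumes g: "colinear sc \<Delta> n (Cn n) n' B g" and B: "B \<subseteq> Cn n'" and l: "l < n"
  shows "g (vins l c) j = sum_list (map (\<lambda>p. sc (Phi g j l (snd p)) (fst p)) (\<Delta> c))"
  using KF1[OF assms, of c j] by (simp add: Phi_def case_prod_unfold)

lemma comp_formula:
  assumes A: "colinear sc \<Delta> m (Cn m) m' (Cn m') FA" and B: "lin_on (Cn m') FB" and l: "l < m"
  shows "\<epsilon> (FB (FA (vins l c)) j) = sum_list (map (\<lambda>p. \<Sum>k<m'. Phi FA k l (snd p) * Phi FB j k (fst p)) (\<Delta> c))"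
proof -
  have inA: "FA (vins l c) \<in> Cn m'" using A Cn_vins[OF l] unfolding colinear_def by blast
  have e1: "FA (vins l c) = (\<Sum>k<m'. sum_list (map (\<lambda>p. vscale sc (Phi FA k l (snd p)) (vins k (fst p))) (\<Delta> c)))"
  proof -
    have "FA (vins l c) = (\<Sum>k<m'. vins k (FA (vins l c) k))" by (rule Cn_decomp[OF inA])
    also have "\<dots> = (\<Sum>k<m'. vins k (sum_list (map (\<lambda>p. sc (Phi FA k l (snd p)) (fst p)) (\<Delta> c))))"
      using KF1'[OF A order_refl l] by simp
    also have "\<dots> = (\<Sum>k<m'. sum_list (map (\<lambda>p. vscale sc (Phi FA k l (snd p)) (vins k (fst p))) (\<Delta> c)))"
      by (simp add: vins_sum_list vins_sc)
    finally show ?thesis .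
  qed
  have mem: "\<And>k p. k \<in> {..<m'} \<Longrightarrow> vscale sc (Phi FA k l (snd p)) (vins k (fst p)) \<in> Cn m'"
    by (simp add: Cn_sc Cn_vins)
  have mem2: "\<And>k. k \<in> {..<m'} \<Longrightarrow> sum_list (map (\<lambda>p. vscale sc (Phi FA k l (snd p)) (vins k (fst p))) (\<Delta> c)) \<in> Cn m'"
    using mem by (simp add: Cn_sum_list)
  have "FB (FA (vins l c)) = (\<Sum>k<m'. FB (sum_list (map (\<lambda>p. vscale sc (Phi FA k l (snd p)) (vins k (fst p))) (\<Delta> c))))"
    unfolding e1 by (rule lin_on_sum[OF B mem2])
  also have "\<dots> = (\<Sum>k<m'. sum_list (map (\<lambda>p. vscale sc (Phi FA k l (snd p)) (FB (vins k (fst p)))) (\<Delta> c)))"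
  proof (rule sum.cong[OF refl])
    fix k assume k: "k \<in> {..<m'}"
    have "FB (sum_list (map (\<lambda>p. vscale sc (Phi FA k l (snd p)) (vins k (fst p))) (\<Delta> c)))
        = sum_list (map (\<lambda>p. FB (vscale sc (Phi FA k l (snd p)) (vins k (fst p)))) (\<Delta> c))"
      by (rule lin_on_sum_list[OF B mem[OF k]])
    also have "\<dots> = sum_list (map (\<lambda>p. vscale sc (Phi FA k l (snd p)) (FB (vins k (fst p)))) (\<Delta> c))"
      using k by (simp add: lin_on_sc[OF B] Cn_vins)
    finally show "FB (sum_list (map (\<lambda>p. vscale sc (Phi FA k l (snd p)) (vins k (fst p))) (\<Delta> c)))
        = sum_list (map (\<lambda>p. vscale sc (Phi FA k l (snd p)) (FB (vins k (fst p)))) (\<Delta> c))" .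
  qed
  finally have "\<epsilon> (FB (FA (vins l c)) j) = (\<Sum>k<m'. sum_list (map (\<lambda>p. Phi FA k l (snd p) * Phi FB j k (fst p)) (\<Delta> c)))"
    by (simp add: sum_app sum_list_app eps_sum eps_sum_list eps_sc Phi_def)
  then show ?thesis by (simp add: sum_sum_list)
qed

lemma coHH0_teq: "c \<in> coHH0 sc \<Delta> \<Longrightarrow> tensor_eq sc sc (\<Delta> c) (map (\<lambda>(u, v). (v, u)) (\<Delta> c))"
  by (simp add: coHH0_def)

lemma trace_swap:
  assumes A: "colinear sc \<Delta> m (Cn m) m' (Cn m') FA" and B: "colinear sc \<Delta> m' (Cn m') m (Cn m) FB"
    and c: "c \<in> coHH0 sc \<Delta>"
  shows "(\<Sum>l<m. \<epsilon> (FB (FA (vins l c)) l)) = (\<Sum>k<m'. \<epsilon> (FA (FB (vins k c)) k))"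
proof -
  have LA: "lin_on (Cn m) FA" and LB: "lin_on (Cn m') FB" using A B by (simp_all add: colinear_lin)
  define H where "H = (\<lambda>u v. \<Sum>l<m. \<Sum>k<m'. Phi FA k l v * Phi FB l k u)"
  have "(\<Sum>l<m. \<epsilon> (FB (FA (vins l c)) l)) = (\<Sum>l<m. sum_list (map (\<lambda>p. \<Sum>k<m'. Phi FA k l (snd p) * Phi FB l k (fst p)) (\<Delta> c)))"
    by (rule sum.cong[OF refl]) (simp add: comp_formula[OF A LB])
  also have "\<dots> = sum_list (map (\<lambda>p. H (fst p) (snd p)) (\<Delta> c))"
    by (simp add: sum_sum_list H_def)
  finally have lhs: "(\<Sum>l<m. \<epsilon> (FB (FA (vins l c)) l)) = sum_list (map (\<lambda>p. H (fst p) (snd p)) (\<Delta> c))" .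
  have "(\<Sum>k<m'. \<epsilon> (FA (FB (vins k c)) k)) = (\<Sum>k<m'. sum_list (map (\<lambda>p. \<Sum>l<m. Phi FB l k (snd p) * Phi FA k l (fst p)) (\<Delta> c)))"
    by (rule sum.cong[OF refl]) (simp add: comp_formula[OF B LA])
  also have "\<dots> = sum_list (map (\<lambda>p. H (snd p) (fst p)) (\<Delta> c))"
    by (simp add: sum_sum_list H_def sum.swap[of _ "{..<m}"] mult.commute)
  finally have rhs: "(\<Sum>k<m'. \<epsilon> (FA (FB (vins k c)) k)) = sum_list (map (\<lambda>p. H (snd p) (fst p)) (\<Delta> c))" .
  have "sum_list (map (\<lambda>p. H (fst p) (snd p)) (\<Delta> c)) = sum_list (map (\<lambda>p. H (fst p) (snd p)) (map (\<lambda>(u, v). (v, u)) (\<Delta> c)))"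
  proof (rule teq_univ[OF coHH0_teq[OF c]])
    fix x x' y show "H (fst (x + x', y)) (snd (x + x', y)) = H (fst (x, y)) (snd (x, y)) + H (fst (x', y)) (snd (x', y))"
      by (simp add: H_def Phi_add[OF LB] ring_distribs sum.distrib)
  next
    fix x y y' show "H (fst (x, y + y')) (snd (x, y + y')) = H (fst (x, y)) (snd (x, y)) + H (fst (x, y')) (snd (x, y'))"
      by (simp add: H_def Phi_add[OF LA] ring_distribs sum.distrib)
  next
    fix a x y show "H (fst (sc a x, y)) (snd (sc a x, y)) = H (fst (x, sc a y)) (snd (x, sc a y))"
      by (simp add: H_def Phi_sc[OF LA] Phi_sc[OF LB] mult.assoc mult.left_commute)
  qed
  also have "\<dots> = sum_list (map (\<lambda>p. H (snd p) (fst p)) (\<Delta> c))"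
    by (simp add: comp_def case_prod_unfold)
  finally show ?thesis using lhs rhs by simp
qed

lemma cotr_formula:
  assumes P: "lin_on (Cn m) (\<lambda>x. i (f (s x)))"
  shows "cotr sc \<Delta> \<epsilon> m i s f c = (if c \<in> coHH0 sc \<Delta> then (\<Sum>l<m. \<epsilon> (i (f (s (vins l c))) l)) else 0)"
proof (cases "c \<in> coHH0 sc \<Delta>")
  case True
  let ?P = "\<lambda>x. i (f (s x))"
  have "cotr sc \<Delta> \<epsilon> m i s f c = sum_list (map (\<lambda>p. \<epsilon> (fst p) * (\<Sum>l<m. Phi ?P l l (snd p))) (\<Delta> c))"
    using True by (simp add: cotr_def Phi_def case_prod_unfold)
  also have "\<dots> = (\<Sum>l<m. sum_list (map (\<lambda>p. Phi ?P l l (sc (\<epsilon> (fst p)) (snd p))) (\<Delta> c)))"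
    by (simp add: sum_sum_list sum_distrib_left Phi_sc[OF P])
  also have "\<dots> = (\<Sum>l<m. Phi ?P l l (sum_list (map (\<lambda>p. sc (\<epsilon> (fst p)) (snd p)) (\<Delta> c))))"
    by (simp add: Phi_sum_list[OF P])
  also have "\<dots> = (\<Sum>l<m. Phi ?P l l c)"
    using counit_l[of c] by (simp add: case_prod_unfold)
  finally show ?thesis using True by (simp add: Phi_def)
qed (simp add: cotr_def)

lemma cotr_data_lin:
  assumes "cotr_data sc \<Delta> n M m i s"
  shows "colinear sc \<Delta> m (Cn m) m (Cn m) (\<lambda>x. i (s x))"
  using assms unfolding cotr_data_def by (blast intro: colinear_comp)

lemma corank_formula:
  assumes "cotr_data sc \<Delta> n M m i s"
  shows "corank sc \<Delta> \<epsilon> m i s c = (if c \<in> coHH0 sc \<Delta> then (\<Sum>l<m. \<epsilon> (i (s (vins l c)) l)) else 0)"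
  unfolding corank_def using cotr_formula[of m i id s c] colinear_lin[OF cotr_data_lin[OF assms]] by simp

lemma corank_indep:
  assumes D1: "cotr_data sc \<Delta> n M m i s" and D2: "cotr_data sc \<Delta> n M m' i' s'"
  shows "corank sc \<Delta> \<epsilon> m i s = corank sc \<Delta> \<epsilon> m' i' s'"
proof
  fix c
  show "corank sc \<Delta> \<epsilon> m i s c = corank sc \<Delta> \<epsilon> m' i' s' c"
  proof (cases "c \<in> coHH0 sc \<Delta>")
    case True
    have i1: "colinear sc \<Delta> n M m (Cn m) i" and s1: "colinear sc \<Delta> m (Cn m) n M s" and r1: "\<forall>x\<in>M. s (i x) = x"
      using D1 unfolding cotr_data_def by auto
    have i2: "colinear sc \<Delta> n M m' (Cn m') i'" and s2: "colinear sc \<Delta> m' (Cn m') n M s'" and r2: "\<forall>x\<in>M. s' (i' x) = x"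
      using D2 unfolding cotr_data_def by auto
    have A: "colinear sc \<Delta> m (Cn m) m' (Cn m') (\<lambda>x. i' (s x))" by (rule colinear_comp[OF s1 i2])
    have B: "colinear sc \<Delta> m' (Cn m') m (Cn m) (\<lambda>x. i (s' x))" by (rule colinear_comp[OF s2 i1])
    have sM: "\<And>x. x \<in> Cn m \<Longrightarrow> s x \<in> M" using s1 unfolding colinear_def by blast
    have sM': "\<And>x. x \<in> Cn m' \<Longrightarrow> s' x \<in> M" using s2 unfolding colinear_def by blast
    have "(\<Sum>l<m. \<epsilon> (i (s (vins l c)) l)) = (\<Sum>l<m. \<epsilon> (i (s' (i' (s (vins l c)))) l))"
      using sM r2 by (simp add: Cn_vins)
    also have "\<dots> = (\<Sum>k<m'. \<epsilon> (i' (s (i (s' (vins k c)))) k))"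
      by (rule trace_swap[OF A B True])
    also have "\<dots> = (\<Sum>k<m'. \<epsilon> (i' (s' (vins k c)) k))"
      using sM' r1 by (simp add: Cn_vins)
    finally show ?thesis using True by (simp add: corank_formula[OF D1] corank_formula[OF D2])
  next
    case False
    then show ?thesis by (simp add: corank_formula[OF D1] corank_formula[OF D2])
  qed
qed

end

context coalg begin

lemma set_coact: "l \<in> set (coact \<Delta> n x) \<Longrightarrow> snd l \<in> Cn n"
  by (auto simp: coact_def Cn_vins)

lemma subcomodule_Cn: "subcomodule sc \<Delta> n (Cn n)"
  unfolding subcomodule_def
proof (intro conjI ballI allI)
  fix x assume x: "(x :: nat \<Rightarrow> 'c) \<in> Cn n"
  have "set (coact \<Delta> n x) \<subseteq> UNIV \<times> Cn n" using set_coact by force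
  then show "\<exists>L. set L \<subseteq> UNIV \<times> Cn n \<and> tensor_eq sc (vscale sc) L (coact \<Delta> n x)"
    using teq_refl by blast
qed (auto simp: Cn_add Cn_sc)

lemma subcomodule_sub: "subcomodule sc \<Delta> n M \<Longrightarrow> M \<subseteq> Cn n"
  by (simp add: subcomodule_def)

lemma colinear_mono: "colinear sc \<Delta> n A m B f \<Longrightarrow> B \<subseteq> B' \<Longrightarrow> colinear sc \<Delta> n A m B' f"
  unfolding colinear_def by blast

lemma colinear_incl: "subcomodule sc \<Delta> n M \<Longrightarrow> colinear sc \<Delta> n M n (Cn n) (\<lambda>x. x)"
  using colinear_mono[OF colinear_id subcomodule_sub] by blast

lemma retraction:
  assumes "injective_comod sc \<Delta> n M"
  shows "\<exists>r. colinear sc \<Delta> n (Cn n) n M r \<and> (\<forall>x\<in>M. r x = x)"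
proof -
  have sM: "subcomodule sc \<Delta> n M" using assms by (simp add: injective_comod_def)
  have "subcomodule sc \<Delta> n M \<and> subcomodule sc \<Delta> n (Cn n) \<and> M \<subseteq> Cn n \<and> colinear sc \<Delta> n M n M (\<lambda>x. x)"
    using sM subcomodule_Cn subcomodule_sub colinear_id by blast
  then show ?thesis using assms unfolding injective_comod_def by blast
qed

lemma data_exists:
  assumes "valid_obj sc \<Delta> (n, M)"
  shows "\<exists>r. cotr_data sc \<Delta> n M n (\<lambda>x. x) r"
proof -
  have inj: "injective_comod sc \<Delta> n M" using assms by (simp add: valid_obj_def)
  then have sM: "subcomodule sc \<Delta> n M" by (simp add: injective_comod_def)
  obtain r where r: "colinear sc \<Delta> n (Cn n) n M r" "\<forall>x\<in>M. r x = x" using retraction[OF inj] by blast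
  have "cotr_data sc \<Delta> n M n (\<lambda>x. x) r"
    unfolding cotr_data_def using colinear_incl[OF sM] r by simp
  then show ?thesis by blast
qed

definition trunc :: "nat \<Rightarrow> (nat \<Rightarrow> 'c) \<Rightarrow> (nat \<Rightarrow> 'c)" where
  "trunc n z = (\<lambda>i. if i < n then z i else 0)"

lemma trunc_add: "trunc n (x + y) = trunc n x + trunc n y" by (simp add: trunc_def fun_eq_iff)
lemma trunc_sc: "trunc n (vscale sc a x) = vscale sc a (trunc n x)" by (simp add: trunc_def fun_eq_iff)
lemma trunc_Cn: "trunc n x \<in> Cn n" by (simp add: trunc_def Cn_def)
lemma trunc_id: "x \<in> Cn n \<Longrightarrow> trunc n x = x" by (simp add: trunc_def Cn_def fun_eq_iff)

lemma colinear_inv: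
  assumes f: "colinear sc \<Delta> n M n' M' f" and bij: "bij_betw f M M'"
    and sM: "subcomodule sc \<Delta> n M" and inj': "injective_comod sc \<Delta> n' M'"
  shows "colinear sc \<Delta> n' M' n M (inv_into M f)"
proof -
  let ?g = "inv_into M f"
  have injf: "inj_on f M" and im: "f ` M = M'" using bij by (auto simp: bij_betw_def)
  have gM: "\<And>y. y \<in> M' \<Longrightarrow> ?g y \<in> M" using im by (auto intro: inv_into_into)
  have fg: "\<And>y. y \<in> M' \<Longrightarrow> f (?g y) = y" using im by (metis f_inv_into_f)
  have gf: "\<And>x. x \<in> M \<Longrightarrow> ?g (f x) = x" using injf by (simp add: inv_into_f_f)
  have fadd: "\<And>x y. x \<in> M \<Longrightarrow> y \<in> M \<Longrightarrow> f (x + y) = f x + f y" using f by (simp add: colinear_def)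
  have fsc: "\<And>a x. x \<in> M \<Longrightarrow> f (vscale sc a x) = vscale sc a (f x)" using f by (simp add: colinear_def)
  have Madd: "\<And>x y. x \<in> M \<Longrightarrow> y \<in> M \<Longrightarrow> x + y \<in> M" using sM by (simp add: subcomodule_def)
  have Msc: "\<And>a x. x \<in> M \<Longrightarrow> vscale sc a x \<in> M" using sM by (simp add: subcomodule_def)
  have gadd: "?g (x + y) = ?g x + ?g y" if "x \<in> M'" "y \<in> M'" for x y
  proof -
    have "f (?g x + ?g y) = x + y" using that by (simp add: fadd gM fg)
    then have "?g (x + y) = ?g (f (?g x + ?g y))" by simp
    also have "\<dots> = ?g x + ?g y" using that by (simp add: gf Madd gM)
    finally show ?thesis .
  qed
  have gsc: "?g (vscale sc a x) = vscale sc a (?g x)" if "x \<in> M'" for a x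
  proof -
    have "f (vscale sc a (?g x)) = vscale sc a x" using that by (simp add: fsc gM fg)
    then have "?g (vscale sc a x) = ?g (f (vscale sc a (?g x)))" by simp
    also have "\<dots> = vscale sc a (?g x)" using that by (simp add: gf Msc gM)
    finally show ?thesis .
  qed
  obtain r where r: "colinear sc \<Delta> n' (Cn n') n' M' r" "\<forall>x\<in>M'. r x = x" using retraction[OF inj'] by blast
  have rM: "\<And>x. x \<in> Cn n' \<Longrightarrow> r x \<in> M'" using r(1) by (simp add: colinear_def)
  have radd: "\<And>x y. x \<in> Cn n' \<Longrightarrow> y \<in> Cn n' \<Longrightarrow> r (x + y) = r x + r y" using r(1) by (simp add: colinear_def)
  have rsc: "\<And>a x. x \<in> Cn n' \<Longrightarrow> r (vscale sc a x) = vscale sc a (r x)" using r(1) by (simp add: colinear_def)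
  have M'C: "M' \<subseteq> Cn n'" using inj' by (simp add: injective_comod_def subcomodule_def)
  define G where "G = (\<lambda>z. ?g (r (trunc n' z)))"
  have Gadd: "G (x + y) = G x + G y" for x y
    unfolding G_def by (simp add: trunc_add radd trunc_Cn gadd rM)
  have Gsc: "G (vscale sc a x) = vscale sc a (G x)" for a x
    unfolding G_def by (simp add: trunc_sc rsc trunc_Cn gsc rM)
  have GM': "\<And>z. z \<in> M' \<Longrightarrow> G z = ?g z" unfolding G_def using M'C r(2) by (auto simp: trunc_id)
  have Gf: "\<And>z. z \<in> M \<Longrightarrow> G (f z) = z" using GM' gf im by auto
  have co: "tensor_eq sc (vscale sc) (map (\<lambda>(u, y). (u, ?g y)) L) (coact \<Delta> n (?g y))"
    if y: "y \<in> M'" and L: "set L \<subseteq> UNIV \<times> M'" "tensor_eq sc (vscale sc) L (coact \<Delta> n' y)" for y L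
  proof -
    let ?x = "?g y"
    have x: "?x \<in> M" using gM y .
    obtain L0 where L0: "set L0 \<subseteq> UNIV \<times> M" "tensor_eq sc (vscale sc) L0 (coact \<Delta> n ?x)"
      using sM x unfolding subcomodule_def by blast
    have "tensor_eq sc (vscale sc) (map (\<lambda>(u, z). (u, f z)) L0) (coact \<Delta> n' (f ?x))"
      using f x L0 unfolding colinear_def by blast
    then have t1: "tensor_eq sc (vscale sc) L (map (\<lambda>(u, z). (u, f z)) L0)"
      using L(2) fg[OF y] by (metis teq_sym teq_trans)
    have t2: "tensor_eq sc (vscale sc) (map (\<lambda>(u, v). (u, G v)) L) (map (\<lambda>(u, v). (u, G v)) (map (\<lambda>(u, z). (u, f z)) L0))"
      by (rule teq_push_VV[OF t1 Gadd Gsc])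
    have e1: "map (\<lambda>(u, v). (u, G v)) L = map (\<lambda>(u, y). (u, ?g y)) L"
      using L(1) GM' by (auto intro!: map_cong)
    have e2: "map (\<lambda>(u, v). (u, G v)) (map (\<lambda>(u, z). (u, f z)) L0) = L0"
    proof -
      show ?thesis unfolding map_map
        by (rule map_idI) (use L0(1) Gf in \<open>auto simp: case_prod_unfold\<close>)
    qed
    show ?thesis using t2 L0(2) unfolding e1 e2 by (rule teq_trans)
  qed
  show ?thesis unfolding colinear_def using gM gadd gsc co by auto
qed

definition rk :: "'c cobj \<Rightarrow> 'c \<Rightarrow> 'k" where
  "rk P = (let D = (SOME D. cotr_data sc \<Delta> (fst P) (snd P) (fst D) (fst (snd D)) (snd (snd D)))
           in corank sc \<Delta> \<epsilon> (fst D) (fst (snd D)) (snd (snd D)))"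

lemma rk_eq:
  assumes "valid_obj sc \<Delta> (n, M)" "cotr_data sc \<Delta> n M m i s"
  shows "rk (n, M) = corank sc \<Delta> \<epsilon> m i s"
proof -
  have ex: "\<exists>D. cotr_data sc \<Delta> n M (fst D) (fst (snd D)) (snd (snd D))"
    using assms(2) by (metis fst_conv snd_conv)
  let ?D = "SOME D. cotr_data sc \<Delta> n M (fst D) (fst (snd D)) (snd (snd D))"
  have "cotr_data sc \<Delta> n M (fst ?D) (fst (snd ?D)) (snd (snd ?D))" by (rule someI_ex[OF ex])
  then show ?thesis unfolding rk_def using corank_indep[OF _ assms(2)] by (simp add: Let_def)
qed

lemma rk_iso:
  assumes P: "valid_obj sc \<Delta> P" and Q: "valid_obj sc \<Delta> Q" and iso: "iso_obj sc \<Delta> P Q"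
  shows "rk P = rk Q"
proof -
  obtain n M where PP: "P = (n, M)" by (cases P)
  obtain n' M' where QQ: "Q = (n', M')" by (cases Q)
  obtain f where f: "colinear sc \<Delta> n M n' M' f" "bij_betw f M M'"
    using iso by (auto simp: iso_obj_def PP QQ)
  have injM: "injective_comod sc \<Delta> n M" and injM': "injective_comod sc \<Delta> n' M'"
    using P Q by (simp_all add: valid_obj_def PP QQ)
  have sM: "subcomodule sc \<Delta> n M" using injM by (simp add: injective_comod_def)
  have sM': "subcomodule sc \<Delta> n' M'" using injM' by (simp add: injective_comod_def)
  obtain r where r: "cotr_data sc \<Delta> n' M' n' (\<lambda>x. x) r" using data_exists Q QQ by blast
  have rc: "colinear sc \<Delta> n' (Cn n') n' M' r" and rr: "\<forall>x\<in>M'. r x = x" using r by (simp_all add: cotr_data_def)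
  let ?g = "inv_into M f"
  have g: "colinear sc \<Delta> n' M' n M ?g" by (rule colinear_inv[OF f sM injM'])
  have fg: "\<And>y. y \<in> M' \<Longrightarrow> f (?g y) = y" using f(2) by (metis bij_betw_def f_inv_into_f)
  have gf: "\<And>x. x \<in> M \<Longrightarrow> ?g (f x) = x" using f(2) by (auto simp: bij_betw_def inv_into_f_f)
  have D: "cotr_data sc \<Delta> n M n' f (\<lambda>y. ?g (r y))"
    unfolding cotr_data_def
  proof (intro conjI)
    show "colinear sc \<Delta> n M n' (Cn n') f" by (rule colinear_mono[OF f(1) subcomodule_sub[OF sM']])
    show "inj_on f M" using f(2) by (simp add: bij_betw_def)
    show "colinear sc \<Delta> n' (Cn n') n M (\<lambda>y. ?g (r y))" by (rule colinear_comp[OF rc g])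
    show "\<forall>x\<in>M. ?g (r (f x)) = x" using rr gf f(2) by (auto simp: bij_betw_def)
  qed
  have rM: "\<And>x. x \<in> Cn n' \<Longrightarrow> r x \<in> M'" using rc by (simp add: colinear_def)
  have "corank sc \<Delta> \<epsilon> n' f (\<lambda>y. ?g (r y)) = corank sc \<Delta> \<epsilon> n' (\<lambda>x. x) r"
  proof
    fix c show "corank sc \<Delta> \<epsilon> n' f (\<lambda>y. ?g (r y)) c = corank sc \<Delta> \<epsilon> n' (\<lambda>x. x) r c"
      unfolding corank_formula[OF D] corank_formula[OF r] using rM fg by (simp add: Cn_vins)
  qed
  then show ?thesis using rk_eq[OF P[unfolded PP] D] rk_eq[OF Q[unfolded QQ] r] PP QQ by simp
qed

end

lemma sum_lessThan_split: "(\<Sum>l<n1 + (n2::nat). f l) = (\<Sum>l<n1. f l) + (\<Sum>l<n2. f (n1 + l))"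
  by (induction n2) (simp_all add: algebra_simps)

lemma upt_split: "[0..<n1 + n2] = [0..<n1] @ map (\<lambda>i. i + n1) [0..<n2]"
  using upt_add_eq_append[of 0 n1 n2] map_add_upt[of n1 n2] by (simp add: add.commute)

context coalg begin

definition join :: "nat \<Rightarrow> (nat \<Rightarrow> 'c) \<Rightarrow> (nat \<Rightarrow> 'c) \<Rightarrow> (nat \<Rightarrow> 'c)" where
  "join k x y = (\<lambda>i. if i < k then x i else y (i - k))"

definition shl :: "nat \<Rightarrow> (nat \<Rightarrow> 'c) \<Rightarrow> (nat \<Rightarrow> 'c)" where
  "shl k z = (\<lambda>i. z (i + k))"

definition DS :: "nat \<Rightarrow> (nat \<Rightarrow> 'c) set \<Rightarrow> (nat \<Rightarrow> 'c) set \<Rightarrow> (nat \<Rightarrow> 'c) set" where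
  "DS k M1 M2 = {join k x y | x y. x \<in> M1 \<and> y \<in> M2}"

lemma dsum_eq: "dsum (n1, M1) (n2, M2) = (n1 + n2, DS n1 M1 M2)"
  unfolding dsum_def DS_def join_def prod.sel by (rule refl)

lemma join_add: "join k x y + join k x' y' = join k (x + x') (y + y')" by (simp add: join_def fun_eq_iff)
lemma join_sc: "vscale sc a (join k x y) = join k (vscale sc a x) (vscale sc a y)" by (simp add: join_def fun_eq_iff)
lemma join_zero: "join k 0 0 = 0" by (simp add: join_def fun_eq_iff)
lemma join_Cn: "x \<in> Cn n1 \<Longrightarrow> y \<in> Cn n2 \<Longrightarrow> join n1 x y \<in> Cn (n1 + n2)" by (simp add: join_def Cn_def)
lemma trunc_join: "x \<in> Cn n1 \<Longrightarrow> trunc n1 (join n1 x y) = x" by (simp add: join_def trunc_def Cn_def fun_eq_iff)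
lemma shl_join: "shl n1 (join n1 x y) = y" by (simp add: join_def shl_def fun_eq_iff)
lemma join_trunc_shl: "join n1 (trunc n1 z) (shl n1 z) = z" by (simp add: join_def trunc_def shl_def fun_eq_iff)
lemma shl_Cn: "z \<in> Cn (n1 + n2) \<Longrightarrow> shl n1 z \<in> Cn n2" by (simp add: shl_def Cn_def)
lemma shl_add: "shl k (x + y) = shl k x + shl k y" by (simp add: shl_def fun_eq_iff)
lemma shl_sc: "shl k (vscale sc a x) = vscale sc a (shl k x)" by (simp add: shl_def fun_eq_iff)
lemma join_split: "join k x y = join k x 0 + join k 0 y" by (simp add: join_def fun_eq_iff)
lemma join_vins_l: "i < k \<Longrightarrow> join k (vins i v) 0 = vins i v" by (simp add: join_def vins_def fun_eq_iff)
lemma join_vins_r: "join k 0 (vins i v) = vins (i + k) v" by (auto simp: join_def vins_def fun_eq_iff)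
lemma trunc_inl: "x \<in> Cn k \<Longrightarrow> trunc k (join k x 0) = x" by (simp add: trunc_join)
lemma trunc_inr: "trunc k (join k 0 y) = 0" by (simp add: join_def trunc_def fun_eq_iff)
lemma shl_inl: "shl k (join k x 0) = 0" by (simp add: join_def shl_def fun_eq_iff)
lemma shl_inr: "shl k (join k 0 y) = y" by (simp add: shl_join)
lemma inl_add: "join k (x + y) 0 = join k x 0 + join k y 0" by (simp add: join_def fun_eq_iff)
lemma inl_sc: "join k (vscale sc a x) 0 = vscale sc a (join k x 0)" by (simp add: join_def fun_eq_iff)
lemma inr_add: "join k 0 (x + y) = join k 0 x + join k 0 y" by (simp add: join_def fun_eq_iff)
lemma inr_sc: "join k 0 (vscale sc a x) = vscale sc a (join k 0 x)" by (simp add: join_def fun_eq_iff)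

lemma coact_cong: "(\<And>i. i < n \<Longrightarrow> z i = z' i) \<Longrightarrow> coact \<Delta> n z = coact \<Delta> n z'"
  unfolding coact_def by (rule arg_cong[where f=concat]) (rule map_cong, auto)

lemma coact_split:
  "coact \<Delta> (n1 + n2) z = map (\<lambda>(u, w). (u, join n1 w 0)) (coact \<Delta> n1 (trunc n1 z))
                          @ map (\<lambda>(u, w). (u, join n1 0 w)) (coact \<Delta> n2 (shl n1 z))"
proof -
  have a: "map (\<lambda>(u, w). (u, join n1 w 0)) (coact \<Delta> n1 (trunc n1 z))
     = concat (map (\<lambda>i. map (\<lambda>(u, v). (u, vins i v)) (\<Delta> (z i))) [0..<n1])"
    unfolding coact_def map_concat by (rule arg_cong[where f=concat]) (auto simp: trunc_def join_vins_l case_prod_unfold)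
  have b: "map (\<lambda>(u, w). (u, join n1 0 w)) (coact \<Delta> n2 (shl n1 z))
     = concat (map (\<lambda>i. map (\<lambda>(u, v). (u, vins i v)) (\<Delta> (z i))) (map (\<lambda>i. i + n1) [0..<n2]))"
    unfolding coact_def map_concat by (rule arg_cong[where f=concat]) (auto simp: shl_def join_vins_r case_prod_unfold)
  show ?thesis unfolding a b by (simp add: coact_def upt_split)
qed

lemma map_push2: "map (\<lambda>(u, w). (u, F w)) (map (\<lambda>(u, w). (u, G w)) L) = map (\<lambda>(u, w). (u, F (G w))) L"
  by (simp add: case_prod_unfold)

lemma coact_trunc:
  "tensor_eq sc (vscale sc) (map (\<lambda>(u, w). (u, trunc n1 w)) (coact \<Delta> (n1 + n2) z)) (coact \<Delta> n1 (trunc n1 z))"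
proof -
  have "map (\<lambda>(u, w). (u, trunc n1 w)) (coact \<Delta> (n1 + n2) z)
      = map (\<lambda>(u, w). (u, trunc n1 (join n1 w 0))) (coact \<Delta> n1 (trunc n1 z))
        @ map (\<lambda>(u, w). (u, trunc n1 (join n1 0 w))) (coact \<Delta> n2 (shl n1 z))"
    unfolding coact_split by (simp add: case_prod_unfold comp_def)
  also have "\<dots> = coact \<Delta> n1 (trunc n1 z) @ map (\<lambda>(u, w). (u, 0)) (coact \<Delta> n2 (shl n1 z))"
  proof -
    have "map (\<lambda>(u, w). (u, trunc n1 (join n1 w 0))) (coact \<Delta> n1 (trunc n1 z)) = coact \<Delta> n1 (trunc n1 z)"
      by (rule map_idI) (auto simp: trunc_inl dest: set_coact)
    then show ?thesis by (simp add: trunc_inr)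
  qed
  finally show ?thesis
    using teq_append[OF teq_refl teq_map_zero[of "coact \<Delta> n2 (shl n1 z)" "\<lambda>(u, w). (u, 0 :: nat \<Rightarrow> 'c)" sc "vscale sc"]]
    by (simp add: case_prod_unfold)
qed

lemma coact_shl:
  "tensor_eq sc (vscale sc) (map (\<lambda>(u, w). (u, shl n1 w)) (coact \<Delta> (n1 + n2) z)) (coact \<Delta> n2 (shl n1 z))"
proof -
  have "map (\<lambda>(u, w). (u, shl n1 w)) (coact \<Delta> (n1 + n2) z)
      = map (\<lambda>(u, w). (u, 0)) (coact \<Delta> n1 (trunc n1 z)) @ coact \<Delta> n2 (shl n1 z)"
    unfolding coact_split by (simp add: shl_inl shl_inr case_prod_unfold comp_def)
  then show ?thesis
    using teq_append[OF teq_map_zero[of "coact \<Delta> n1 (trunc n1 z)" "\<lambda>(u, w). (u, 0 :: nat \<Rightarrow> 'c)" sc "vscale sc"] teq_refl]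
    by (simp add: case_prod_unfold)
qed

lemma colinear_trunc:
  assumes "D \<subseteq> Cn (n1 + n2)" "\<And>z. z \<in> D \<Longrightarrow> trunc n1 z \<in> B1"
  shows "colinear sc \<Delta> (n1 + n2) D n1 B1 (trunc n1)"
  unfolding colinear_def
proof (intro conjI ballI allI impI)
  fix z L assume z: "z \<in> D" and L: "set L \<subseteq> UNIV \<times> D \<and> tensor_eq sc (vscale sc) L (coact \<Delta> (n1 + n2) z)"
  have "tensor_eq sc (vscale sc) (map (\<lambda>(u, w). (u, trunc n1 w)) L) (map (\<lambda>(u, w). (u, trunc n1 w)) (coact \<Delta> (n1 + n2) z))"
    using L by (intro teq_push_VV) (simp_all add: trunc_add trunc_sc)
  then show "tensor_eq sc (vscale sc) (map (\<lambda>(u, y). (u, trunc n1 y)) L) (coact \<Delta> n1 (trunc n1 z))"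
    using coact_trunc teq_trans by blast
qed (use assms in \<open>auto simp: trunc_add trunc_sc\<close>)

lemma colinear_shl:
  assumes "D \<subseteq> Cn (n1 + n2)" "\<And>z. z \<in> D \<Longrightarrow> shl n1 z \<in> B2"
  shows "colinear sc \<Delta> (n1 + n2) D n2 B2 (shl n1)"
  unfolding colinear_def
proof (intro conjI ballI allI impI)
  fix z L assume z: "z \<in> D" and L: "set L \<subseteq> UNIV \<times> D \<and> tensor_eq sc (vscale sc) L (coact \<Delta> (n1 + n2) z)"
  have "tensor_eq sc (vscale sc) (map (\<lambda>(u, w). (u, shl n1 w)) L) (map (\<lambda>(u, w). (u, shl n1 w)) (coact \<Delta> (n1 + n2) z))"
    using L by (intro teq_push_VV) (simp_all add: shl_add shl_sc)
  then show "tensor_eq sc (vscale sc) (map (\<lambda>(u, y). (u, shl n1 y)) L) (coact \<Delta> n2 (shl n1 z))"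
    using coact_shl teq_trans by blast
qed (use assms in \<open>auto simp: shl_add shl_sc\<close>)

lemma colinear_join:
  assumes h1: "colinear sc \<Delta> p A n1 B1 h1" and h2: "colinear sc \<Delta> p A n2 B2 h2"
    and B1: "B1 \<subseteq> Cn n1"
  shows "colinear sc \<Delta> p A (n1 + n2) (DS n1 B1 B2) (\<lambda>a. join n1 (h1 a) (h2 a))"
  unfolding colinear_def
proof (intro conjI ballI allI impI)
  fix x assume x: "x \<in> A"
  then show "join n1 (h1 x) (h2 x) \<in> DS n1 B1 B2" using h1 h2 by (auto simp: DS_def colinear_def)
next
  fix x y assume "x \<in> A" "y \<in> A"
  then show "join n1 (h1 (vadd x y)) (h2 (vadd x y)) = vadd (join n1 (h1 x) (h2 x)) (join n1 (h1 y) (h2 y))"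
    using h1 h2 by (simp add: colinear_def join_add)
next
  fix a x assume "x \<in> A"
  then show "join n1 (h1 (vscale sc a x)) (h2 (vscale sc a x)) = vscale sc a (join n1 (h1 x) (h2 x))"
    using h1 h2 by (simp add: colinear_def join_sc)
next
  fix x L assume x: "x \<in> A" and L: "set L \<subseteq> UNIV \<times> A \<and> tensor_eq sc (vscale sc) L (coact \<Delta> p x)"
  have t1: "tensor_eq sc (vscale sc) (map (\<lambda>(u, y). (u, h1 y)) L) (coact \<Delta> n1 (h1 x))"
    using h1 x L unfolding colinear_def by blast
  have t2: "tensor_eq sc (vscale sc) (map (\<lambda>(u, y). (u, h2 y)) L) (coact \<Delta> n2 (h2 x))"
    using h2 x L unfolding colinear_def by blast
  have h1x: "h1 x \<in> Cn n1" using h1 x B1 unfolding colinear_def by blast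
  have p1: "tensor_eq sc (vscale sc) (map (\<lambda>(u, w). (u, join n1 w 0)) (map (\<lambda>(u, y). (u, h1 y)) L))
      (map (\<lambda>(u, w). (u, join n1 w 0)) (coact \<Delta> n1 (h1 x)))"
    by (rule teq_push_VV[OF t1]) (simp_all add: inl_add inl_sc)
  have p2: "tensor_eq sc (vscale sc) (map (\<lambda>(u, w). (u, join n1 0 w)) (map (\<lambda>(u, y). (u, h2 y)) L))
      (map (\<lambda>(u, w). (u, join n1 0 w)) (coact \<Delta> n2 (h2 x)))"
    by (rule teq_push_VV[OF t2]) (simp_all add: inr_add inr_sc)
  have s: "tensor_eq sc (vscale sc) (map (\<lambda>p. (fst p, join n1 (h1 (snd p)) 0 + join n1 0 (h2 (snd p)))) L)
     (map (\<lambda>p. (fst p, join n1 (h1 (snd p)) 0)) L @ map (\<lambda>p. (fst p, join n1 0 (h2 (snd p)))) L)"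
    by (rule teq_map_split)
  have "tensor_eq sc (vscale sc) (map (\<lambda>(u, y). (u, join n1 (h1 y) (h2 y))) L)
     (map (\<lambda>(u, w). (u, join n1 w 0)) (coact \<Delta> n1 (h1 x)) @ map (\<lambda>(u, w). (u, join n1 0 w)) (coact \<Delta> n2 (h2 x)))"
  proof -
    have e1: "map (\<lambda>(u, w). (u, join n1 w 0)) (map (\<lambda>(u, y). (u, h1 y)) L) = map (\<lambda>p. (fst p, join n1 (h1 (snd p)) 0)) L"
      by (simp add: case_prod_unfold)
    have e2: "map (\<lambda>(u, w). (u, join n1 0 w)) (map (\<lambda>(u, y). (u, h2 y)) L) = map (\<lambda>p. (fst p, join n1 0 (h2 (snd p)))) L"
      by (simp add: case_prod_unfold)
    have e3: "map (\<lambda>p. (fst p, join n1 (h1 (snd p)) 0 + join n1 0 (h2 (snd p)))) L = map (\<lambda>(u, y). (u, join n1 (h1 y) (h2 y))) L"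
      by (simp add: case_prod_unfold join_split[symmetric])
    show ?thesis using teq_trans[OF s teq_append[OF p1[unfolded e1] p2[unfolded e2]]] unfolding e3 .
  qed
  moreover have "coact \<Delta> (n1 + n2) (join n1 (h1 x) (h2 x))
      = map (\<lambda>(u, w). (u, join n1 w 0)) (coact \<Delta> n1 (h1 x)) @ map (\<lambda>(u, w). (u, join n1 0 w)) (coact \<Delta> n2 (h2 x))"
    unfolding coact_split trunc_join[OF h1x] shl_join ..
  ultimately show "tensor_eq sc (vscale sc) (map (\<lambda>(u, y). (u, join n1 (h1 y) (h2 y))) L) (coact \<Delta> (n1 + n2) (join n1 (h1 x) (h2 x)))"
    by simp
qed

end

context coalg begin

lemma subcomodule_DS:
  assumes sM1: "subcomodule sc \<Delta> n1 M1" and sM2: "subcomodule sc \<Delta> n2 M2"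
  shows "subcomodule sc \<Delta> (n1 + n2) (DS n1 M1 M2)"
proof -
  have M1: "M1 \<subseteq> Cn n1" "0 \<in> M1" "\<And>x y. x \<in> M1 \<Longrightarrow> y \<in> M1 \<Longrightarrow> x + y \<in> M1" "\<And>a x. x \<in> M1 \<Longrightarrow> vscale sc a x \<in> M1"
    using sM1 by (auto simp: subcomodule_def)
  have M2: "M2 \<subseteq> Cn n2" "0 \<in> M2" "\<And>x y. x \<in> M2 \<Longrightarrow> y \<in> M2 \<Longrightarrow> x + y \<in> M2" "\<And>a x. x \<in> M2 \<Longrightarrow> vscale sc a x \<in> M2"
    using sM2 by (auto simp: subcomodule_def)
  have sub: "DS n1 M1 M2 \<subseteq> Cn (n1 + n2)" using M1(1) M2(1) join_Cn unfolding DS_def by blast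
  have zero: "0 \<in> DS n1 M1 M2" using M1(2) M2(2) join_zero unfolding DS_def by force
  have add: "x + y \<in> DS n1 M1 M2" if "x \<in> DS n1 M1 M2" "y \<in> DS n1 M1 M2" for x y
    using that M1(3) M2(3) unfolding DS_def by (force simp: join_add)
  have scl: "vscale sc a x \<in> DS n1 M1 M2" if "x \<in> DS n1 M1 M2" for a x
    using that M1(4) M2(4) unfolding DS_def by (force simp: join_sc)
  have co: "\<exists>L. set L \<subseteq> UNIV \<times> DS n1 M1 M2 \<and> tensor_eq sc (vscale sc) L (coact \<Delta> (n1 + n2) z)"
    if z: "z \<in> DS n1 M1 M2" for z
  proof -
    obtain x y where xy: "z = join n1 x y" "x \<in> M1" "y \<in> M2" using z unfolding DS_def by blast
    obtain L1 where L1: "set L1 \<subseteq> UNIV \<times> M1" "tensor_eq sc (vscale sc) L1 (coact \<Delta> n1 x)"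
      using sM1 xy(2) unfolding subcomodule_def by blast
    obtain L2 where L2: "set L2 \<subseteq> UNIV \<times> M2" "tensor_eq sc (vscale sc) L2 (coact \<Delta> n2 y)"
      using sM2 xy(3) unfolding subcomodule_def by blast
    let ?L = "map (\<lambda>(u, w). (u, join n1 w 0)) L1 @ map (\<lambda>(u, w). (u, join n1 0 w)) L2"
    have "set ?L \<subseteq> UNIV \<times> DS n1 M1 M2" using L1(1) L2(1) M1(2) M2(2) unfolding DS_def by fastforce
    moreover have "tensor_eq sc (vscale sc) ?L (coact \<Delta> (n1 + n2) z)"
    proof -
      have p1: "tensor_eq sc (vscale sc) (map (\<lambda>(u, w). (u, join n1 w 0)) L1) (map (\<lambda>(u, w). (u, join n1 w 0)) (coact \<Delta> n1 x))"
        by (rule teq_push_VV[OF L1(2)]) (simp_all add: inl_add inl_sc)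
      have p2: "tensor_eq sc (vscale sc) (map (\<lambda>(u, w). (u, join n1 0 w)) L2) (map (\<lambda>(u, w). (u, join n1 0 w)) (coact \<Delta> n2 y))"
        by (rule teq_push_VV[OF L2(2)]) (simp_all add: inr_add inr_sc)
      have "coact \<Delta> (n1 + n2) z = map (\<lambda>(u, w). (u, join n1 w 0)) (coact \<Delta> n1 x) @ map (\<lambda>(u, w). (u, join n1 0 w)) (coact \<Delta> n2 y)"
        unfolding coact_split xy(1) trunc_join[OF subsetD[OF M1(1) xy(2)]] shl_join ..
      then show ?thesis using teq_append[OF p1 p2] by simp
    qed
    ultimately show ?thesis by blast
  qed
  show ?thesis unfolding subcomodule_def using sub zero add scl co by auto
qed

lemma injective_DS:
  assumes i1: "injective_comod sc \<Delta> n1 M1" and i2: "injective_comod sc \<Delta> n2 M2"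
  shows "injective_comod sc \<Delta> (n1 + n2) (DS n1 M1 M2)"
proof -
  have sM1: "subcomodule sc \<Delta> n1 M1" and sM2: "subcomodule sc \<Delta> n2 M2"
    using i1 i2 by (simp_all add: injective_comod_def)
  have sD: "subcomodule sc \<Delta> (n1 + n2) (DS n1 M1 M2)" by (rule subcomodule_DS[OF sM1 sM2])
  have M1C: "M1 \<subseteq> Cn n1" using sM1 by (rule subcomodule_sub)
  have DC: "DS n1 M1 M2 \<subseteq> Cn (n1 + n2)" using sD by (rule subcomodule_sub)
  have tr: "colinear sc \<Delta> (n1 + n2) (DS n1 M1 M2) n1 M1 (trunc n1)"
    by (rule colinear_trunc[OF DC]) (auto simp: DS_def trunc_join subsetD[OF M1C])
  have sh: "colinear sc \<Delta> (n1 + n2) (DS n1 M1 M2) n2 M2 (shl n1)"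
    by (rule colinear_shl[OF DC]) (auto simp: DS_def shl_join)
  have ext: "\<exists>h. colinear sc \<Delta> p B (n1 + n2) (DS n1 M1 M2) h \<and> (\<forall>x\<in>A. h x = g x)"
    if sA: "subcomodule sc \<Delta> p A" and sB: "subcomodule sc \<Delta> p B" and AB: "A \<subseteq> B"
      and g: "colinear sc \<Delta> p A (n1 + n2) (DS n1 M1 M2) g" for p A B g
  proof -
    have g1: "colinear sc \<Delta> p A n1 M1 (\<lambda>x. trunc n1 (g x))" by (rule colinear_comp[OF g tr])
    have g2: "colinear sc \<Delta> p A n2 M2 (\<lambda>x. shl n1 (g x))" by (rule colinear_comp[OF g sh])
    obtain h1 where h1: "colinear sc \<Delta> p B n1 M1 h1" "\<forall>x\<in>A. h1 x = trunc n1 (g x)"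
      using i1 sA sB AB g1 unfolding injective_comod_def by blast
    obtain h2 where h2: "colinear sc \<Delta> p B n2 M2 h2" "\<forall>x\<in>A. h2 x = shl n1 (g x)"
      using i2 sA sB AB g2 unfolding injective_comod_def by blast
    have "colinear sc \<Delta> p B (n1 + n2) (DS n1 M1 M2) (\<lambda>b. join n1 (h1 b) (h2 b))"
      by (rule colinear_join[OF h1(1) h2(1) M1C])
    moreover have "\<forall>x\<in>A. join n1 (h1 x) (h2 x) = g x" using h1(2) h2(2) by (simp add: join_trunc_shl)
    ultimately show ?thesis by blast
  qed
  show ?thesis unfolding injective_comod_def using sD ext by blast
qed

lemma valid_dsum:
  assumes "valid_obj sc \<Delta> P" "valid_obj sc \<Delta> Q"
  shows "valid_obj sc \<Delta> (dsum P Q)"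
proof -
  obtain n1 M1 where P: "P = (n1, M1)" by (cases P)
  obtain n2 M2 where Q: "Q = (n2, M2)" by (cases Q)
  show ?thesis using assms injective_DS unfolding P Q dsum_eq valid_obj_def by simp
qed

lemma shl_vins_lt: "l < k \<Longrightarrow> shl k (vins l c) = 0" by (simp add: shl_def vins_def fun_eq_iff)
lemma trunc_vins_lt: "l < k \<Longrightarrow> trunc k (vins l c) = vins l c" by (simp add: trunc_def vins_def fun_eq_iff)
lemma shl_vins_ge: "shl k (vins (k + l) c) = vins l c" by (simp add: shl_def vins_def fun_eq_iff)
lemma trunc_vins_ge: "trunc k (vins (k + l) c) = 0" by (simp add: trunc_def vins_def fun_eq_iff)

lemma rk_dsum:
  assumes PV: "valid_obj sc \<Delta> P" and QV: "valid_obj sc \<Delta> Q"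
  shows "rk (dsum P Q) c = rk P c + rk Q c"
proof -
  obtain n1 M1 where P: "P = (n1, M1)" by (cases P)
  obtain n2 M2 where Q: "Q = (n2, M2)" by (cases Q)
  obtain r1 where r1: "cotr_data sc \<Delta> n1 M1 n1 (\<lambda>x. x) r1" using data_exists PV P by blast
  obtain r2 where r2: "cotr_data sc \<Delta> n2 M2 n2 (\<lambda>x. x) r2" using data_exists QV Q by blast
  have i1: "injective_comod sc \<Delta> n1 M1" and i2: "injective_comod sc \<Delta> n2 M2"
    using PV QV by (simp_all add: P Q valid_obj_def)
  have sM1: "subcomodule sc \<Delta> n1 M1" and sM2: "subcomodule sc \<Delta> n2 M2"
    using i1 i2 by (simp_all add: injective_comod_def)
  have M1C: "M1 \<subseteq> Cn n1" using sM1 by (rule subcomodule_sub)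
  have r1c: "colinear sc \<Delta> n1 (Cn n1) n1 M1 r1" and r1r: "\<forall>x\<in>M1. r1 x = x" using r1 by (simp_all add: cotr_data_def)
  have r2c: "colinear sc \<Delta> n2 (Cn n2) n2 M2 r2" and r2r: "\<forall>x\<in>M2. r2 x = x" using r2 by (simp_all add: cotr_data_def)
  have sD: "subcomodule sc \<Delta> (n1 + n2) (DS n1 M1 M2)" by (rule subcomodule_DS[OF sM1 sM2])
  define s where "s = (\<lambda>w. join n1 (r1 (trunc n1 w)) (r2 (shl n1 w)))"
  have trc: "colinear sc \<Delta> (n1 + n2) (Cn (n1 + n2)) n1 (Cn n1) (trunc n1)"
    by (rule colinear_trunc) (auto simp: trunc_Cn)
  have shc: "colinear sc \<Delta> (n1 + n2) (Cn (n1 + n2)) n2 (Cn n2) (shl n1)"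
    by (rule colinear_shl) (auto simp: shl_Cn)
  have sc': "colinear sc \<Delta> (n1 + n2) (Cn (n1 + n2)) (n1 + n2) (DS n1 M1 M2) s"
    unfolding s_def by (rule colinear_join[OF colinear_comp[OF trc r1c] colinear_comp[OF shc r2c] M1C])
  have D: "cotr_data sc \<Delta> (n1 + n2) (DS n1 M1 M2) (n1 + n2) (\<lambda>x. x) s"
    unfolding cotr_data_def
  proof (intro conjI)
    show "colinear sc \<Delta> (n1 + n2) (DS n1 M1 M2) (n1 + n2) (Cn (n1 + n2)) (\<lambda>x. x)" by (rule colinear_incl[OF sD])
    show "\<forall>x\<in>DS n1 M1 M2. s x = x"
      using r1r r2r M1C by (auto simp: DS_def s_def trunc_join shl_join)
  qed (simp_all add: sc')
  have DV: "valid_obj sc \<Delta> (n1 + n2, DS n1 M1 M2)" using valid_dsum[OF PV QV] by (simp add: P Q dsum_eq)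
  have r10: "r1 0 = 0" using lin_on_zero[OF colinear_lin[OF r1c] Cn_zero] .
  have r20: "r2 0 = 0" using lin_on_zero[OF colinear_lin[OF r2c] Cn_zero] .
  have "corank sc \<Delta> \<epsilon> (n1 + n2) (\<lambda>x. x) s c = corank sc \<Delta> \<epsilon> n1 (\<lambda>x. x) r1 c + corank sc \<Delta> \<epsilon> n2 (\<lambda>x. x) r2 c"
  proof (cases "c \<in> coHH0 sc \<Delta>")
    case True
    have "(\<Sum>l<n1 + n2. \<epsilon> (s (vins l c) l)) = (\<Sum>l<n1. \<epsilon> (s (vins l c) l)) + (\<Sum>l<n2. \<epsilon> (s (vins (n1 + l) c) (n1 + l)))"
      by (rule sum_lessThan_split)
    also have "(\<Sum>l<n1. \<epsilon> (s (vins l c) l)) = (\<Sum>l<n1. \<epsilon> (r1 (vins l c) l))"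
      by (rule sum.cong[OF refl]) (simp add: s_def trunc_vins_lt shl_vins_lt r20 join_def)
    also have "(\<Sum>l<n2. \<epsilon> (s (vins (n1 + l) c) (n1 + l))) = (\<Sum>l<n2. \<epsilon> (r2 (vins l c) l))"
      by (rule sum.cong[OF refl]) (simp add: s_def trunc_vins_ge shl_vins_ge r10 join_def)
    finally show ?thesis using True by (simp add: corank_formula[OF D] corank_formula[OF r1] corank_formula[OF r2])
  next
    case False then show ?thesis by (simp add: corank_formula[OF D] corank_formula[OF r1] corank_formula[OF r2])
  qed
  then show ?thesis using rk_eq[OF DV D] rk_eq[OF PV[unfolded P] r1] rk_eq[OF QV[unfolded Q] r2]
    by (simp add: P Q dsum_eq)
qed

lemma valid_zobj: "valid_obj sc \<Delta> zobj"
proof -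
  have Cn0: "Cn 0 = {0 :: nat \<Rightarrow> 'c}" by (auto simp: Cn_def fun_eq_iff)
  have coact0: "coact \<Delta> 0 x = []" for x by (simp add: coact_def)
  have co0: "\<forall>x\<in>{0}. \<exists>L. set L \<subseteq> UNIV \<times> {0} \<and> tensor_eq sc (vscale sc) L (coact \<Delta> 0 (x :: nat \<Rightarrow> 'c))"
    by (intro ballI exI[of _ "[]"]) (simp add: coact0 teq_refl)
  have s0: "subcomodule sc \<Delta> 0 {0 :: nat \<Rightarrow> 'c}"
    unfolding subcomodule_def using Cn0 co0 by simp
  have ext: "\<exists>h. colinear sc \<Delta> p B 0 {0} h \<and> (\<forall>x\<in>A. h x = g x)"
    if g: "colinear sc \<Delta> p A 0 {0} g" for p A B g
  proof -
    have z: "tensor_eq sc (vscale sc) (map (\<lambda>(u, y). (u, 0 :: nat \<Rightarrow> 'c)) L) []" for L :: "('c \<times> (nat \<Rightarrow> 'c)) list"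
      by (rule teq_map_zero) (simp add: case_prod_unfold)
    have "colinear sc \<Delta> p B 0 {0} (\<lambda>_. 0)"
      unfolding colinear_def coact0 using z by simp
    moreover have "\<forall>x\<in>A. 0 = g x" using g by (auto simp: colinear_def)
    ultimately show ?thesis by (intro exI[of _ "\<lambda>_. 0"]) auto
  qed
  show ?thesis unfolding valid_obj_def zobj_def injective_comod_def using s0 ext by simp
qed

lemma rk_zobj: "rk zobj c = 0"
proof -
  obtain r where r: "cotr_data sc \<Delta> 0 {0} 0 (\<lambda>x. x) r" using data_exists valid_zobj by (auto simp: zobj_def)
  show ?thesis using rk_eq[of 0 "{0}", OF _ r] valid_zobj corank_formula[OF r] by (simp add: zobj_def)
qed

lemma coHH0_add:
  assumes x: "x \<in> coHH0 sc \<Delta>" and y: "y \<in> coHH0 sc \<Delta>"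
  shows "x + y \<in> coHH0 sc \<Delta>"
proof -
  let ?sw = "map (\<lambda>(u, v). (v, u))"
  have a: "tensor_eq sc sc (\<Delta> (x + y)) (\<Delta> x @ \<Delta> y)" by (rule Delta_add)
  have b: "tensor_eq sc sc (\<Delta> x @ \<Delta> y) (?sw (\<Delta> x) @ ?sw (\<Delta> y))"
    using teq_append[OF coHH0_teq[OF x] coHH0_teq[OF y]] .
  have c: "tensor_eq sc sc (?sw (\<Delta> x @ \<Delta> y)) (?sw (\<Delta> (x + y)))"
    by (rule teq_swap[OF teq_sym[OF a]])
  have "tensor_eq sc sc (\<Delta> (x + y)) (?sw (\<Delta> (x + y)))"
    using teq_trans[OF teq_trans[OF a b]] c by simp
  then show ?thesis by (simp add: coHH0_def)
qed

lemma coHH0_sc: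
  assumes x: "x \<in> coHH0 sc \<Delta>"
  shows "sc a x \<in> coHH0 sc \<Delta>"
proof -
  let ?sw = "map (\<lambda>(u, v). (v, u))"
  let ?S = "map (\<lambda>(u, v). (sc a u, v))"
  have a: "tensor_eq sc sc (\<Delta> (sc a x)) (?S (\<Delta> x))" by (rule Delta_sc)
  have b: "tensor_eq sc sc (?S (\<Delta> x)) (?S (?sw (\<Delta> x)))"
    using teq_push[OF coHH0_teq[OF x], of "sc a" "\<lambda>v. v" sc sc] by (simp add: sc_add sc_comm)
  have c: "tensor_eq sc sc (?S (?sw (\<Delta> x))) (?sw (?S (\<Delta> x)))"
  proof -
    have "tensor_eq sc sc (map (\<lambda>p. (sc a (snd p), fst p)) (\<Delta> x)) (map (\<lambda>p. (snd p, sc a (fst p))) (\<Delta> x))"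
      by (rule teq_map_cong) (rule teq_bal)
    then show ?thesis by (simp add: case_prod_unfold comp_def)
  qed
  have d: "tensor_eq sc sc (?sw (?S (\<Delta> x))) (?sw (\<Delta> (sc a x)))"
    by (rule teq_swap[OF teq_sym[OF a]])
  have "tensor_eq sc sc (\<Delta> (sc a x)) (?sw (\<Delta> (sc a x)))"
    using teq_trans[OF teq_trans[OF teq_trans[OF a b] c] d] .
  then show ?thesis by (simp add: coHH0_def)
qed

lemma rk_lin:
  assumes PV: "valid_obj sc \<Delta> P"
  shows "\<forall>x\<in>coHH0 sc \<Delta>. \<forall>y\<in>coHH0 sc \<Delta>. rk P (x + y) = rk P x + rk P y"
    and "\<forall>a. \<forall>x\<in>coHH0 sc \<Delta>. rk P (sc a x) = a * rk P x"
    and "\<forall>x. x \<notin> coHH0 sc \<Delta> \<longrightarrow> rk P x = 0"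
proof -
  obtain n M where P: "P = (n, M)" by (cases P)
  obtain r where r: "cotr_data sc \<Delta> n M n (\<lambda>x. x) r" using data_exists PV P by blast
  have L: "lin_on (Cn n) (\<lambda>x. r x)" using colinear_lin[OF cotr_data_lin[OF r]] by simp
  have rk: "rk P c = (if c \<in> coHH0 sc \<Delta> then (\<Sum>l<n. Phi r l l c) else 0)" for c
    using rk_eq[OF PV[unfolded P] r] corank_formula[OF r] P by (simp add: Phi_def)
  show "\<forall>x\<in>coHH0 sc \<Delta>. \<forall>y\<in>coHH0 sc \<Delta>. rk P (x + y) = rk P x + rk P y"
    by (simp add: rk coHH0_add Phi_add[OF L] sum.distrib)
  show "\<forall>a. \<forall>x\<in>coHH0 sc \<Delta>. rk P (sc a x) = a * rk P x"
    by (simp add: rk coHH0_sc Phi_sc[OF L] sum_distrib_left)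
  show "\<forall>x. x \<notin> coHH0 sc \<Delta> \<longrightarrow> rk P x = 0" by (simp add: rk)
qed

end

context coalg begin

lemma iso_refl: "valid_obj sc \<Delta> X \<Longrightarrow> iso_obj sc \<Delta> X X"
  unfolding iso_obj_def valid_obj_def injective_comod_def
  using colinear_id bij_betw_id[unfolded id_def] by blast

lemma self_in_cls:
  assumes P: "valid_obj sc \<Delta> P" and Q: "valid_obj sc \<Delta> Q"
  shows "(P, Q) \<in> K0cls sc \<Delta> P Q"
proof -
  have "valid_obj sc \<Delta> (dsum (dsum P Q) zobj)" using valid_dsum P Q valid_zobj by blast
  then have "K0rel sc \<Delta> (P, Q) (P, Q)" unfolding K0rel_def using valid_zobj iso_refl
    by (intro exI[of _ zobj]) simp
  then show ?thesis using P Q by (simp add: K0cls_def)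
qed

lemma cls_rk:
  assumes P: "valid_obj sc \<Delta> P" and Q: "valid_obj sc \<Delta> Q" and PQ: "PQ \<in> K0cls sc \<Delta> P Q"
  shows "rk (fst PQ) c - rk (snd PQ) c = rk P c - rk Q c"
proof -
  have P': "valid_obj sc \<Delta> (fst PQ)" and Q': "valid_obj sc \<Delta> (snd PQ)" and rel: "K0rel sc \<Delta> (P, Q) PQ"
    using PQ by (simp_all add: K0cls_def)
  obtain R where R: "valid_obj sc \<Delta> R" and iso: "iso_obj sc \<Delta> (dsum (dsum P (snd PQ)) R) (dsum (dsum (fst PQ) Q) R)"
    using rel by (auto simp: K0rel_def)
  have "rk (dsum (dsum P (snd PQ)) R) c = rk (dsum (dsum (fst PQ) Q) R) c"
    using rk_iso[OF _ _ iso] valid_dsum P Q P' Q' R by metis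
  then have "rk P c + rk (snd PQ) c + rk R c = rk (fst PQ) c + rk Q c + rk R c"
    using rk_dsum valid_dsum P Q P' Q' R by metis
  then show ?thesis by (simp add: algebra_simps)
qed

definition phi :: "('c cobj \<times> 'c cobj) set \<Rightarrow> 'c \<Rightarrow> 'k" where
  "phi X = (let PQ = SOME PQ. PQ \<in> X in (\<lambda>c. rk (fst PQ) c - rk (snd PQ) c))"

lemma phi_cls:
  assumes P: "valid_obj sc \<Delta> P" and Q: "valid_obj sc \<Delta> Q"
  shows "phi (K0cls sc \<Delta> P Q) = (\<lambda>c. rk P c - rk Q c)"
proof -
  have "(SOME PQ. PQ \<in> K0cls sc \<Delta> P Q) \<in> K0cls sc \<Delta> P Q" using self_in_cls[OF P Q] by (rule someI)
  then show ?thesis unfolding phi_def Let_def using cls_rk[OF P Q] by simp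
qed

lemma phi_hom: "phi \<in> hom (K0c sc \<Delta>) (dual_coHH0 sc \<Delta>)"
proof -
  have carr: "phi X \<in> carrier (dual_coHH0 sc \<Delta>)" if X: "X \<in> carrier (K0c sc \<Delta>)" for X
  proof -
    obtain P Q where PQ: "X = K0cls sc \<Delta> P Q" "valid_obj sc \<Delta> P" "valid_obj sc \<Delta> Q"
      using X by (auto simp: K0c_def)
    note lP = rk_lin[OF PQ(2)] and lQ = rk_lin[OF PQ(3)]
    show ?thesis unfolding PQ(1) phi_cls[OF PQ(2) PQ(3)] dual_coHH0_def
      using lP lQ by (simp add: algebra_simps)
  qed
  have mult: "phi (X \<otimes>\<^bsub>K0c sc \<Delta>\<^esub> Y) = phi X \<otimes>\<^bsub>dual_coHH0 sc \<Delta>\<^esub> phi Y"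
    if X: "X \<in> carrier (K0c sc \<Delta>)" and Y: "Y \<in> carrier (K0c sc \<Delta>)" for X Y
  proof -
    obtain P Q where PQ: "X = K0cls sc \<Delta> P Q" "valid_obj sc \<Delta> P" "valid_obj sc \<Delta> Q"
      using X by (auto simp: K0c_def)
    obtain P' Q' where PQ': "Y = K0cls sc \<Delta> P' Q'" "valid_obj sc \<Delta> P'" "valid_obj sc \<Delta> Q'"
      using Y by (auto simp: K0c_def)
    define A where "A = (SOME PQ. PQ \<in> X)"
    define B where "B = (SOME PQ. PQ \<in> Y)"
    have A: "A \<in> X" unfolding A_def using self_in_cls[OF PQ(2) PQ(3)] PQ(1) by (metis someI)
    have B: "B \<in> Y" unfolding B_def using self_in_cls[OF PQ'(2) PQ'(3)] PQ'(1) by (metis someI)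
    have vA: "valid_obj sc \<Delta> (fst A)" "valid_obj sc \<Delta> (snd A)" using A PQ(1) by (simp_all add: K0cls_def)
    have vB: "valid_obj sc \<Delta> (fst B)" "valid_obj sc \<Delta> (snd B)" using B PQ'(1) by (simp_all add: K0cls_def)
    have m: "X \<otimes>\<^bsub>K0c sc \<Delta>\<^esub> Y = K0cls sc \<Delta> (dsum (fst A) (fst B)) (dsum (snd A) (snd B))"
      by (simp add: K0c_def A_def B_def Let_def)
    have pX: "phi X = (\<lambda>c. rk (fst A) c - rk (snd A) c)" by (simp add: phi_def A_def Let_def)
    have pY: "phi Y = (\<lambda>c. rk (fst B) c - rk (snd B) c)" by (simp add: phi_def B_def Let_def)
    show ?thesis unfolding m pX pY phi_cls[OF valid_dsum[OF vA(1) vB(1)] valid_dsum[OF vA(2) vB(2)]]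
      by (simp add: dual_coHH0_def rk_dsum vA vB fun_eq_iff algebra_simps)
  qed
  show ?thesis unfolding hom_def using carr mult by auto
qed

end

theorem theorem2p14:
  fixes sc :: "'k::comm_ring_1 \<Rightarrow> 'c::ab_group_add \<Rightarrow> 'c"
    and \<Delta> :: "'c \<Rightarrow> ('c \<times> 'c) list"
    and \<epsilon> :: "'c \<Rightarrow> 'k"
  assumes "finite_product_of_fields TYPE('k)"
    and "coalgebra sc \<Delta> \<epsilon>"
  shows "\<exists>\<phi>. \<phi> \<in> hom (K0c sc \<Delta>) (dual_coHH0 sc \<Delta>)
           \<and> (\<forall>n M m i s. valid_obj sc \<Delta> (n, M) \<and> cotr_data sc \<Delta> n M m i s \<longrightarrow>
                 \<phi> (K0cls sc \<Delta> (n, M) zobj) = corank sc \<Delta> \<epsilon> m i s)"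
proof -
  interpret C: coalg sc \<Delta> \<epsilon> by (rule coalg.intro) (rule assms(2))
  have "C.phi (K0cls sc \<Delta> (n, M) zobj) = corank sc \<Delta> \<epsilon> m i s"
    if "valid_obj sc \<Delta> (n, M)" "cotr_data sc \<Delta> n M m i s" for n M m i s
    using C.phi_cls[OF that(1) C.valid_zobj] C.rk_zobj C.rk_eq[OF that] by simp
  then show ?thesis using C.phi_hom by blast
qed


end
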